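(* Let $C=\operatorname{conv}(\gamma_1\cup\gamma_2)\subset\mathbb{R}^3$, where $\gamma_1(t)=(\cos t,\sin t,1)$ for $t\in[0,\pi/2]$ and $\gamma_2(t)=(\cos t,\sin t,-1)$ for $t\in[0,\pi]$, and let $K=\operatorname{cone}(C\times\{1\})\subset\mathbb{R}^4$. Then $K$ is facially dual complete, but the tangent cone $\mathcal{T}(\bar x;C)$ at $\bar x=(0,1,1)$ is not facially exposed; in particular $K$ is not strongly tangentially exposed. Thus strong tangential exposure is not necessary for facial dual completeness.
   Context: $\mathbb{R}^4$ is identified with its dual. $\operatorname{cone}(S)=\{\lambda s:\lambda\ge0,s\in\operatorname{conv}S\}$. Tangent cone: $\mathcal{T}(x;D)=\operatorname{cl}\{d: x+\epsilon d\in D\text{ for some }\epsilon>0\}$. A face of a closed convex set $D$ is a closed convex $F\subseteq D$ such that $x\in F$, $y,z\in D$, $x\in(y,z)$ imply $y,z\in F$; it is exposed if $F=D\cap H$ for some supporting hyperplane $H$; $D$ is facially exposed if every nonempty face $F\ne D$ is exposed. A closed convex cone $K$ is tangentially exposed if $\mathcal{T}(x;K)\cap\operatorname{span}F=\mathcal{T}(x;F)$ for all faces $F\ne K$, $x\in F$. Lexicographic tangent cones: cones obtained by iterating the tangent-cone operation (tangent cones of $K$, tangent cones of those, etc.); $K$ is strongly tangentially exposed if $K$ and all its lexicographic tangent cones are tangentially exposed. $K$ is facially dual complete if $K^*+F^\perp$ is closed for every nonempty face $F\ne K$, where $K^*=\{s:\langle s,x\rangle\ge0\ \forall x\in K\}$,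 $F^\perp=\{s:\langle s,x\rangle=0\ \forall x\in F\}$. *)

theory Defs
  imports "HOL-Analysis.Analysis"
begin

definition pcone :: "'a::real_vector set \<Rightarrow> 'a set" where
  "pcone S = {c *\<^sub>R s | c s. c \<ge> 0 \<and> s \<in> convex hull S}"

definition tcone :: "'a::real_normed_vector \<Rightarrow> 'a set \<Rightarrow> 'a set" where
  "tcone x D = closure {d. \<exists>e>0. x + e *\<^sub>R d \<in> D}"

definition pface :: "'a::euclidean_space set \<Rightarrow> 'a set \<Rightarrow> bool" where
  "pface F D \<longleftrightarrow> closed F \<and> F face_of D"

definition pexposed :: "'a::euclidean_space set \<Rightarrow> 'a set \<Rightarrow> bool" where
  "pexposed F D \<longleftrightarrow> pface F D \<and>
     (\<exists>a b. a \<noteq> 0 \<and> D \<subseteq> {x. a \<bullet> x \<le> b} \<and> F = D \<inter> {x. a \<bullet> x = b})"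

definition facially_exposed :: "'a::euclidean_space set \<Rightarrow> bool" where
  "facially_exposed D \<longleftrightarrow> (\<forall>F. pface F D \<and> F \<noteq> {} \<and> F \<noteq> D \<longrightarrow> pexposed F D)"

definition tangentially_exposed :: "'a::euclidean_space set \<Rightarrow> bool" where
  "tangentially_exposed K \<longleftrightarrow>
     (\<forall>F x. pface F K \<and> F \<noteq> K \<and> x \<in> F \<longrightarrow> tcone x K \<inter> span F = tcone x F)"

inductive_set lex_tcones :: "'a::euclidean_space set \<Rightarrow> 'a set set" for K where
  base: "x \<in> K \<Longrightarrow> tcone x K \<in> lex_tcones K"
| step: "L \<in> lex_tcones K \<Longrightarrow> x \<in> L \<Longrightarrow> tcone x L \<in> lex_tcones K"

definition strongly_tangentially_exposed :: "'a::euclidean_space set \<Rightarrow> bool" where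
  "strongly_tangentially_exposed K \<longleftrightarrow>
     tangentially_exposed K \<and> (\<forall>L \<in> lex_tcones K. tangentially_exposed L)"

definition dual_cone :: "'a::euclidean_space set \<Rightarrow> 'a set" where
  "dual_cone K = {s. \<forall>x\<in>K. s \<bullet> x \<ge> 0}"

definition perp :: "'a::euclidean_space set \<Rightarrow> 'a set" where
  "perp F = {s. \<forall>x\<in>F. s \<bullet> x = 0}"

definition facially_dual_complete :: "'a::euclidean_space set \<Rightarrow> bool" where
  "facially_dual_complete K \<longleftrightarrow>
     (\<forall>F. pface F K \<and> F \<noteq> {} \<and> F \<noteq> K \<longrightarrow>
        closed {u + v | u v. u \<in> dual_cone K \<and> v \<in> perp F})"

definition gamma1 :: "real \<Rightarrow> real^3" where
  "gamma1 t = vector [cos t, sin t, 1]"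

definition gamma2 :: "real \<Rightarrow> real^3" where
  "gamma2 t = vector [cos t, sin t, -1]"

definition exC :: "(real^3) set" where
  "exC = convex hull (gamma1 ` {0..pi/2} \<union> gamma2 ` {0..pi})"

text \<open>Identification of C \<times> {1} with a subset of R^4.\<close>
definition lift1 :: "real^3 \<Rightarrow> real^4" where
  "lift1 v = vector [v$1, v$2, v$3, 1]"

definition exK :: "(real^4) set" where
  "exK = pcone (lift1 ` exC)"

definition xbar :: "real^3" where
  "xbar = vector [0, 1, 1]"

end

theory Submission
  imports Defs
begin


lemma vector_4 [simp]:
 "(vector [x,y,z,w] ::('a::zero)^4)$1 = x"
 "(vector [x,y,z,w] ::('a::zero)^4)$2 = y"
 "(vector [x,y,z,w] ::('a::zero)^4)$3 = z"
 "(vector [x,y,z,w] ::('a::zero)^4)$4 = w"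
  unfolding vector_def by simp_all

lemma inner4: "(a::real^4) \<bullet> b = a$1*b$1 + a$2*b$2 + a$3*b$3 + a$4*b$4"
  by (simp add: inner_vec_def sum_4)

lemma inner3: "(a::real^3) \<bullet> b = a$1*b$1 + a$2*b$2 + a$3*b$3"
  by (simp add: inner_vec_def sum_3)

lemma vec4_eq: "(a::real^4) = b \<longleftrightarrow> a$1 = b$1 \<and> a$2 = b$2 \<and> a$3 = b$3 \<and> a$4 = b$4"
  by (simp add: vec_eq_iff forall_4)

lemma vec3_eq: "(a::real^3) = b \<longleftrightarrow> a$1 = b$1 \<and> a$2 = b$2 \<and> a$3 = b$3"
  by (simp add: vec_eq_iff forall_3)

definition topP :: "real \<Rightarrow> real \<Rightarrow> real^4" where "topP x y = vector [x,y,1,1]"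
definition botP :: "real \<Rightarrow> real \<Rightarrow> real^4" where "botP x y = vector [x,y,-1,1]"

definition TQ :: "(real \<times> real) set" where "TQ = {(x,y). x\<^sup>2+y\<^sup>2=1 \<and> 0\<le>x \<and> 0\<le>y}"
definition BH :: "(real \<times> real) set" where "BH = {(x,y). x\<^sup>2+y\<^sup>2=1 \<and> 0\<le>y}"

definition Gs :: "(real^4) set" where
  "Gs = (\<lambda>(x,y). topP x y) ` TQ \<union> (\<lambda>(x,y). botP x y) ` BH"

lemma lift_gen: "lift1 ` (gamma1 ` {0..pi/2} \<union> gamma2 ` {0..pi}) = Gs"
proof
  show "lift1 ` (gamma1 ` {0..pi/2} \<union> gamma2 ` {0..pi}) \<subseteq> Gs"
  proof
    fix v assume "v \<in> lift1 ` (gamma1 ` {0..pi/2} \<union> gamma2 ` {0..pi})"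
    then consider t where "t \<in> {0..pi/2}" "v = lift1 (gamma1 t)" | t where "t \<in> {0..pi}" "v = lift1 (gamma2 t)"
      by blast
    then show "v \<in> Gs"
    proof cases
      case 1
      then have "v = topP (cos t) (sin t)"
        by (simp add: lift1_def gamma1_def topP_def vec4_eq)
      moreover have "(cos t, sin t) \<in> TQ" using 1
        by (auto simp: TQ_def intro!: cos_ge_zero sin_ge_zero)
      ultimately show ?thesis unfolding Gs_def by force
    next
      case 2
      then have "v = botP (cos t) (sin t)"
        by (simp add: lift1_def gamma2_def botP_def vec4_eq)
      moreover have "(cos t, sin t) \<in> BH" using 2
        by (auto simp: BH_def intro!: sin_ge_zero)
      ultimately show ?thesis unfolding Gs_def by force
    qed
  qed
next
  show "Gs \<subseteq> lift1 ` (gamma1 ` {0..pi/2} \<union> gamma2 ` {0..pi})"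
  proof
    fix v assume "v \<in> Gs"
    then consider x y where "(x,y) \<in> TQ" "v = topP x y" | x y where "(x,y) \<in> BH" "v = botP x y"
      unfolding Gs_def by auto
    then show "v \<in> lift1 ` (gamma1 ` {0..pi/2} \<union> gamma2 ` {0..pi})"
    proof cases
      case 1
      then obtain t where t: "0 \<le> t" "t \<le> pi/2" "x = cos t" "y = sin t"
        using sincos_total_pi_half by (auto simp: TQ_def)
      then have "v = lift1 (gamma1 t)" using 1
        by (simp add: lift1_def gamma1_def topP_def vec4_eq)
      then show ?thesis using t by auto
    next
      case 2
      then obtain t where t: "0 \<le> t" "t \<le> pi" "x = cos t" "y = sin t"
        using sincos_total_pi by (auto simp: BH_def)
      then have "v = lift1 (gamma2 t)" using 2
        by (simp add: lift1_def gamma2_def botP_def vec4_eq)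
      then show ?thesis using t by auto
    qed
  qed
qed

definition L4 :: "real^3 \<Rightarrow> real^4" where "L4 v = vector [v$1, v$2, v$3, 0]"

lemma linear_L4: "linear L4"
  unfolding linear_iff by (simp add: L4_def vec4_eq)

lemma lift1_alt: "lift1 = (\<lambda>v. vector [0,0,0,1] + L4 v)"
  by (rule ext) (simp add: lift1_def L4_def vec4_eq)

lemma lift1_hull: "lift1 ` (convex hull S) = convex hull (lift1 ` S)"
proof -
  have "lift1 ` S = (\<lambda>x. vector [0,0,0,1] + x) ` (L4 ` S)" for S
    unfolding lift1_alt by (simp add: image_image)
  then show ?thesis
    by (simp add: convex_hull_translation convex_hull_linear_image[OF linear_L4])
qed

lemma exK_eq: "exK = {c *\<^sub>R y | c y. 0 \<le> c \<and> y \<in> convex hull Gs}"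
proof -
  have "convex hull (lift1 ` exC) = convex hull Gs"
    unfolding exC_def lift1_hull hull_hull lift_gen ..
  then show ?thesis unfolding exK_def pcone_def by simp
qed


lemma Gs_sub_K: "Gs \<subseteq> exK"
proof
  fix g assume "g \<in> Gs"
  then have "g = 1 *\<^sub>R g \<and> (0::real) \<le> 1 \<and> g \<in> convex hull Gs" by (simp add: hull_inc)
  then show "g \<in> exK" unfolding exK_eq by blast
qed

lemma K_scale: "x \<in> exK \<Longrightarrow> 0 \<le> c \<Longrightarrow> c *\<^sub>R x \<in> exK"
proof -
  assume "x \<in> exK" "0 \<le> c"
  then obtain c' y where "x = c' *\<^sub>R y" "0 \<le> c'" "y \<in> convex hull Gs" unfolding exK_eq by blast
  then have "c *\<^sub>R x = (c * c') *\<^sub>R y \<and> 0 \<le> c * c' \<and> y \<in> convex hull Gs" using \<open>0 \<le> c\<close> by simp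
  then show ?thesis unfolding exK_eq by blast
qed

lemma conic_K: "conic exK"
  unfolding conic_def using K_scale by blast

lemma K_add: assumes "x \<in> exK" "y \<in> exK" shows "x + y \<in> exK"
proof -
  obtain c1 y1 where 1: "x = c1 *\<^sub>R y1" "0 \<le> c1" "y1 \<in> convex hull Gs" using assms(1) unfolding exK_eq by blast
  obtain c2 y2 where 2: "y = c2 *\<^sub>R y2" "0 \<le> c2" "y2 \<in> convex hull Gs" using assms(2) unfolding exK_eq by blast
  show ?thesis
  proof (cases "c1 + c2 = 0")
    case True
    then have "c1 = 0" "c2 = 0" using 1 2 by auto
    then have "x + y = 0 *\<^sub>R y1" using 1 2 by simp
    then show ?thesis unfolding exK_eq using 1 by blast
  next
    case False
    then have pos: "c1 + c2 > 0" using 1 2 by auto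
    let ?z = "(c1/(c1+c2)) *\<^sub>R y1 + (c2/(c1+c2)) *\<^sub>R y2"
    have "?z \<in> convex hull Gs"
      using 1 2 pos by (intro convexD[OF convex_convex_hull]) (auto simp: add_divide_distrib[symmetric])
    moreover have "x + y = (c1 + c2) *\<^sub>R ?z"
      using 1 2 pos by (simp add: scaleR_add_right)
    ultimately show ?thesis unfolding exK_eq using pos by force
  qed
qed

lemma convex_K: "convex exK"
  unfolding convex_def using K_add K_scale by simp

lemma zero_K: "0 \<in> exK"
proof -
  have "topP 1 0 \<in> Gs" unfolding Gs_def TQ_def by force
  then show ?thesis using K_scale[of "topP 1 0" 0] Gs_sub_K by auto
qed

lemma K_sum: "finite S \<Longrightarrow> (\<And>i. i \<in> S \<Longrightarrow> f i \<in> exK) \<Longrightarrow> sum f S \<in> exK"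
  by (induction S rule: finite_induct) (auto simp: zero_K K_add)

lemma K_dual:
  assumes "\<And>g. g \<in> Gs \<Longrightarrow> 0 \<le> u \<bullet> g" "x \<in> exK"
  shows "0 \<le> u \<bullet> x"
proof -
  obtain c y where 1: "x = c *\<^sub>R y" "0 \<le> c" "y \<in> convex hull Gs" using assms(2) unfolding exK_eq by blast
  have "convex hull Gs \<subseteq> {y. 0 \<le> u \<bullet> y}"
    by (rule hull_minimal) (use assms(1) convex_halfspace_ge[of 0 u] in auto)
  then show ?thesis using 1 by auto
qed

lemma K_repr:
  assumes "x \<in> exK"
  obtains S c where "finite S" "S \<subseteq> Gs" "\<And>g. g \<in> S \<Longrightarrow> 0 \<le> c g" "x = (\<Sum>g\<in>S. c g *\<^sub>R g)"
proof -
  obtain k y where 1: "x = k *\<^sub>R y" "0 \<le> k" "y \<in> convex hull Gs" using assms unfolding exK_eq by blast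
  then obtain S u where 2: "finite S" "S \<subseteq> Gs" "\<forall>x\<in>S. 0 \<le> u x" "sum u S = 1" "(\<Sum>v\<in>S. u v *\<^sub>R v) = y"
    unfolding convex_hull_explicit by blast
  show ?thesis
    apply (rule that[of S "\<lambda>g. k * u g"])
    using 1 2 by (auto simp: scaleR_sum_right)
qed

locale KF =
  fixes F :: "(real^4) set"
  assumes face: "F face_of exK" and ne: "F \<noteq> {}"
begin

lemma conicF: "conic F" using face_of_conic[OF conic_K face] .

lemma FsubK: "F \<subseteq> exK" using face face_of_imp_subset by blast

lemma zeroF: "0 \<in> F" proof -
  obtain a where "a \<in> F" using ne by blast
  then have "0 *\<^sub>R a \<in> F" using conicF unfolding conic_def by blast
  then show ?thesis by simp
qed

lemma F_sum: assumes "a \<in> exK" "b \<in> exK" "a + b \<in> F" shows "a \<in> F"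
proof -
  have m: "midpoint a b \<in> F" using conicF assms(3) unfolding conic_def midpoint_def
    by simp
  show ?thesis
  proof (cases "a = b")
    case True then show ?thesis using m by (simp add: midpoint_def scaleR_2[symmetric])
  next
    case False then show ?thesis using face_ofD[OF face _ assms(1,2) m] by simp
  qed
qed

lemma F_add: assumes "a \<in> F" "b \<in> F" shows "a + b \<in> F"
proof -
  have "(1/2) *\<^sub>R a + (1/2) *\<^sub>R b \<in> F" using face_of_imp_convex[OF face] assms
    by (intro convexD) auto
  then have "midpoint a b \<in> F" unfolding midpoint_def by (simp add: scaleR_add_right)
  then have "2 *\<^sub>R midpoint a b \<in> F" using conicF unfolding conic_def by (meson zero_le_numeral)
  then show ?thesis by (simp add: midpoint_def)
qed

lemma F_scale: "a \<in> F \<Longrightarrow> 0 \<le> c \<Longrightarrow> c *\<^sub>R a \<in> F"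
  using conicF unfolding conic_def by blast

lemma span_F: "span F \<subseteq> {a - b | a b. a \<in> F \<and> b \<in> F}"
proof (rule span_minimal)
  show "F \<subseteq> {a - b |a b. a \<in> F \<and> b \<in> F}" using zeroF by force
  show "subspace {a - b |a b. a \<in> F \<and> b \<in> F}"
    unfolding subspace_def
  proof (intro conjI allI impI ballI)
    show "0 \<in> {a - b |a b. a \<in> F \<and> b \<in> F}" using zeroF by force
    fix x y assume "x \<in> {a - b |a b. a \<in> F \<and> b \<in> F}" "y \<in> {a - b |a b. a \<in> F \<and> b \<in> F}"
    then obtain a b c d where "x = a - b" "y = c - d" "a \<in> F" "b \<in> F" "c \<in> F" "d \<in> F" by blast
    then show "x + y \<in> {a - b |a b. a \<in> F \<and> b \<in> F}"
      by (intro CollectI exI[of _ "a + c"] exI[of _ "b + d"]) (auto simp: F_add)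
  next
    fix x and r :: real assume "x \<in> {a - b |a b. a \<in> F \<and> b \<in> F}"
    then obtain a b where ab: "x = a - b" "a \<in> F" "b \<in> F" by blast
    show "r *\<^sub>R x \<in> {a - b |a b. a \<in> F \<and> b \<in> F}"
    proof (cases "0 \<le> r")
      case True then show ?thesis using ab
        by (intro CollectI exI[of _ "r *\<^sub>R a"] exI[of _ "r *\<^sub>R b"]) (auto simp: F_scale scaleR_diff_right)
    next
      case False
      have "r *\<^sub>R x = (-r) *\<^sub>R b - (-r) *\<^sub>R a" by (simp add: ab algebra_simps)
      moreover have "(-r) *\<^sub>R b \<in> F" "(-r) *\<^sub>R a \<in> F" using F_scale[of b "-r"] F_scale[of a "-r"] False ab by auto
      ultimately show ?thesis by blast
    qed
  qed
qed

lemma F_span: assumes "x \<in> exK" "x \<in> span F" shows "x \<in> F"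
proof -
  obtain a b where ab: "x = a - b" "a \<in> F" "b \<in> F" using span_F assms(2) by blast
  have "x + b \<in> F" using ab by simp
  then show ?thesis using F_sum[OF assms(1)] FsubK ab by blast
qed

lemma F_gen: assumes "g \<in> exK" "h \<in> exK" "0 < c" "c *\<^sub>R g + h \<in> F" shows "g \<in> F"
proof -
  have "c *\<^sub>R g \<in> F" using F_sum[OF _ assms(2,4)] K_scale[OF assms(1)] assms(3) by simp
  then have "inverse c *\<^sub>R (c *\<^sub>R g) \<in> F" by (rule F_scale) (use assms(3) in simp)
  then show ?thesis using assms(3) by simp
qed

lemma F_sub_spanZ: "F \<subseteq> span (Gs \<inter> F)"
proof
  fix x assume xF: "x \<in> F"
  then have "x \<in> exK" using FsubK by blast
  obtain S c where S: "finite S" "S \<subseteq> Gs" "\<And>g. g \<in> S \<Longrightarrow> 0 \<le> c g" "x = (\<Sum>g\<in>S. c g *\<^sub>R g)"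
    using K_repr[OF \<open>x \<in> exK\<close>] by blast
  have "c g *\<^sub>R g \<in> span (Gs \<inter> F)" if g: "g \<in> S" for g
  proof (cases "c g = 0")
    case True then show ?thesis by (simp add: span_zero)
  next
    case False
    then have cpos: "0 < c g" using S(3) g by (simp add: less_le)
    have "x = c g *\<^sub>R g + (\<Sum>h\<in>S-{g}. c h *\<^sub>R h)" using S(1,4) g by (simp add: sum.remove)
    moreover have "(\<Sum>h\<in>S-{g}. c h *\<^sub>R h) \<in> exK"
      using S Gs_sub_K by (intro K_sum) (auto intro!: K_scale)
    ultimately have "g \<in> F" using F_gen[of g _ "c g"] cpos xF g S(2) Gs_sub_K by auto
    then show ?thesis using g S(2) by (intro span_mul span_base) auto
  qed
  then show "x \<in> span (Gs \<inter> F)" using S(4) by (simp add: span_sum)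
qed

end


lemma dot_top: "n \<bullet> topP x y = n$1*x + n$2*y + n$3 + n$4"
  by (simp add: inner4 topP_def)
lemma dot_bot: "n \<bullet> botP x y = n$1*x + n$2*y - n$3 + n$4"
  by (simp add: inner4 botP_def)

lemma pos_pert:
  fixes t p q :: real
  assumes "\<bar>t\<bar> \<le> 1/2" "\<bar>t\<bar> \<le> p/4" "\<bar>q\<bar> \<le> 1" "0 \<le> p"
  shows "0 \<le> (1 - t\<^sup>2)*p + 2*t*q"
proof -
  have "t\<^sup>2 \<le> 1/4"
  proof -
    have "t\<^sup>2 = \<bar>t\<bar> * \<bar>t\<bar>" by (simp add: power2_eq_square abs_mult_self_eq)
    also have "\<dots> \<le> (1/2) * (1/2)" using assms(1) by (intro mult_mono) auto
    finally show ?thesis by simp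
  qed
  then have "(3/4) * p \<le> (1 - t\<^sup>2)*p" using assms(4) by (intro mult_right_mono) auto
  moreover have "\<bar>2*t*q\<bar> \<le> 2*\<bar>t\<bar>"
  proof -
    have "\<bar>2*t*q\<bar> = 2*\<bar>t\<bar>*\<bar>q\<bar>" by (simp add: abs_mult)
    also have "\<dots> \<le> 2*\<bar>t\<bar>*1" using assms(3) by (intro mult_left_mono) auto
    finally show ?thesis by simp
  qed
  ultimately show ?thesis using assms(2) by linarith
qed

lemma lin_div: "a*(p/d) + b*(q/d) = (a*p + b*q)/(d::real)"
  by (simp add: add_divide_distrib)

lemma pert_circle:
  fixes x0 y0 t a b :: real
  assumes "x0\<^sup>2 + y0\<^sup>2 = 1"
  defines "X \<equiv> ((1 - t\<^sup>2)*x0 - 2*t*y0) / (1 + t\<^sup>2)"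
  defines "Y \<equiv> ((1 - t\<^sup>2)*y0 + 2*t*x0) / (1 + t\<^sup>2)"
  shows "X\<^sup>2 + Y\<^sup>2 = 1"
    and "a*X + b*Y = ((1 - t\<^sup>2)*(a*x0 + b*y0) + 2*t*(b*x0 - a*y0)) / (1 + t\<^sup>2)"
proof -
  have "0 \<le> t\<^sup>2" by simp
  then have d: "1 + t\<^sup>2 \<noteq> 0" by linarith
  have "X\<^sup>2 + Y\<^sup>2 = (((1 - t\<^sup>2)*x0 - 2*t*y0)\<^sup>2 + ((1 - t\<^sup>2)*y0 + 2*t*x0)\<^sup>2) / (1 + t\<^sup>2)\<^sup>2"
    unfolding X_def Y_def power_divide by (simp only: add_divide_distrib)
  also have "((1 - t\<^sup>2)*x0 - 2*t*y0)\<^sup>2 + ((1 - t\<^sup>2)*y0 + 2*t*x0)\<^sup>2 = (1 + t\<^sup>2)\<^sup>2 * (x0\<^sup>2 + y0\<^sup>2)"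
    by algebra
  finally show "X\<^sup>2 + Y\<^sup>2 = 1" using assms(1) d by simp
  show "a*X + b*Y = ((1 - t\<^sup>2)*(a*x0 + b*y0) + 2*t*(b*x0 - a*y0)) / (1 + t\<^sup>2)"
  proof -
    have "a*X + b*Y = (a*((1 - t\<^sup>2)*x0 - 2*t*y0) + b*((1 - t\<^sup>2)*y0 + 2*t*x0)) / (1 + t\<^sup>2)"
      unfolding X_def Y_def by (rule lin_div)
    also have "a*((1 - t\<^sup>2)*x0 - 2*t*y0) + b*((1 - t\<^sup>2)*y0 + 2*t*x0) = (1 - t\<^sup>2)*(a*x0 + b*y0) + 2*t*(b*x0 - a*y0)"
      by algebra
    finally show ?thesis .
  qed
qed

lemma zero_deriv:
  fixes k m d0 :: real
  assumes "0 < d0" "\<And>t. \<bar>t\<bar> \<le> d0 \<Longrightarrow> t\<^sup>2 * m \<le> t * k"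
  shows "k = 0"
proof (rule ccontr)
  assume k: "k \<noteq> 0"
  define d where "d = min d0 (\<bar>k\<bar> / (2 * (\<bar>m\<bar> + 1)))"
  have dpos: "0 < d" using assms(1) k by (simp add: d_def)
  have dle: "d \<le> d0" by (simp add: d_def)
  have d2: "d * (2 * (\<bar>m\<bar> + 1)) \<le> \<bar>k\<bar>"
  proof -
    have "d \<le> \<bar>k\<bar> / (2 * (\<bar>m\<bar> + 1))" by (simp add: d_def)
    then have "d * (2 * (\<bar>m\<bar> + 1)) \<le> \<bar>k\<bar> / (2 * (\<bar>m\<bar> + 1)) * (2 * (\<bar>m\<bar> + 1))"
      by (intro mult_right_mono) auto
    then show ?thesis by simp
  qed
  have 1: "d\<^sup>2 * m \<le> d * k" using assms(2)[of d] dpos dle by simp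
  have 2: "d\<^sup>2 * m \<le> - d * k" using assms(2)[of "-d"] dpos dle by simp
  have "d * \<bar>k\<bar> \<le> - (d\<^sup>2 * m)" using 1 2 by (cases "k \<ge> 0") (auto simp: abs_if)
  also have "\<dots> \<le> d\<^sup>2 * \<bar>m\<bar>" using dpos by (simp add: abs_if mult_le_0_iff)
  finally have "d * \<bar>k\<bar> \<le> d * (d * \<bar>m\<bar>)" by (simp add: power2_eq_square mult.assoc)
  then have "\<bar>k\<bar> \<le> d * \<bar>m\<bar>" using dpos by simp
  moreover have "d * \<bar>m\<bar> < d * (2 * (\<bar>m\<bar> + 1))" using dpos by simp
  ultimately show False using d2 by linarith
qed


lemma pert_ineq:
  fixes a b c x0 y0 t :: real
  assumes "x0\<^sup>2 + y0\<^sup>2 = 1" "a*x0 + b*y0 + c = 0"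
    and "0 \<le> a*(((1 - t\<^sup>2)*x0 - 2*t*y0) / (1 + t\<^sup>2)) + b*(((1 - t\<^sup>2)*y0 + 2*t*x0) / (1 + t\<^sup>2)) + c"
  shows "t\<^sup>2 * (a*x0 + b*y0) \<le> t * (b*x0 - a*y0)"
proof -
  have "0 \<le> t\<^sup>2" by simp
  then have D: "0 < 1 + t\<^sup>2" by linarith
  define m where "m = a*x0 + b*y0"
  define k where "k = b*x0 - a*y0"
  have "0 \<le> ((1 - t\<^sup>2)*m + 2*t*k) / (1 + t\<^sup>2) - m"
    using assms(3) pert_circle(2)[OF assms(1), where t=t and a=a and b=b] assms(2) unfolding m_def k_def by linarith
  also have "\<dots> = (2*t*k - 2*t\<^sup>2*m) / (1 + t\<^sup>2)"
    using D by (simp add: field_simps)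
  finally have "0 \<le> 2*t*k - 2*t\<^sup>2*m" using D by (simp add: zero_le_divide_iff)
  then show ?thesis unfolding m_def k_def by simp
qed

lemma pert_TQ:
  fixes x0 y0 t :: real
  assumes "(x0,y0) \<in> TQ" "\<bar>t\<bar> \<le> 1/2" "\<bar>t\<bar> \<le> x0/4" "\<bar>t\<bar> \<le> y0/4"
  shows "(((1 - t\<^sup>2)*x0 - 2*t*y0) / (1 + t\<^sup>2), ((1 - t\<^sup>2)*y0 + 2*t*x0) / (1 + t\<^sup>2)) \<in> TQ"
proof -
  have c: "x0\<^sup>2 + y0\<^sup>2 = 1" "0 \<le> x0" "0 \<le> y0" using assms(1) by (auto simp: TQ_def)
  have "0 \<le> x0\<^sup>2" "0 \<le> y0\<^sup>2" by simp_all
  then have "x0\<^sup>2 \<le> 1" "y0\<^sup>2 \<le> 1" using c(1) by linarith+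
  then have b: "\<bar>x0\<bar> \<le> 1" "\<bar>y0\<bar> \<le> 1" by (simp_all add: abs_square_le_1)
  have "0 \<le> t\<^sup>2" by simp
  then have D: "0 < 1 + t\<^sup>2" by linarith
  have 1: "0 \<le> (1 - t\<^sup>2)*x0 + 2*t*(-y0)" using b c assms by (intro pos_pert) auto
  have 2: "0 \<le> (1 - t\<^sup>2)*y0 + 2*t*x0" using b c assms by (intro pos_pert) auto
  show ?thesis using pert_circle(1)[OF c(1), where t=t] 1 2 D unfolding TQ_def by auto
qed

lemma pert_BH:
  fixes x0 y0 t :: real
  assumes "(x0,y0) \<in> BH" "\<bar>t\<bar> \<le> 1/2" "\<bar>t\<bar> \<le> y0/4"
  shows "(((1 - t\<^sup>2)*x0 - 2*t*y0) / (1 + t\<^sup>2), ((1 - t\<^sup>2)*y0 + 2*t*x0) / (1 + t\<^sup>2)) \<in> BH"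
proof -
  have c: "x0\<^sup>2 + y0\<^sup>2 = 1" "0 \<le> y0" using assms(1) by (auto simp: BH_def)
  have "0 \<le> y0\<^sup>2" by simp
  then have "x0\<^sup>2 \<le> 1" using c(1) by linarith
  then have b: "\<bar>x0\<bar> \<le> 1" by (simp add: abs_square_le_1)
  have "0 \<le> t\<^sup>2" by simp
  then have D: "0 < 1 + t\<^sup>2" by linarith
  have 2: "0 \<le> (1 - t\<^sup>2)*y0 + 2*t*x0" using b c assms by (intro pos_pert) auto
  show ?thesis using pert_circle(1)[OF c(1), where t=t] 2 D unfolding BH_def by auto
qed

lemma int_zero_T:
  fixes a b c x0 y0 :: real
  assumes T: "\<And>x y. (x,y) \<in> TQ \<Longrightarrow> 0 \<le> a*x + b*y + c"
    and z: "(x0,y0) \<in> TQ" "0 < x0" "0 < y0" "a*x0 + b*y0 + c = 0"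
  shows "b*x0 - a*y0 = 0"
proof (rule zero_deriv)
  show "0 < min (1/2) (min (x0/4) (y0/4))" using z by simp
  fix t :: real assume t: "\<bar>t\<bar> \<le> min (1/2) (min (x0/4) (y0/4))"
  have c: "x0\<^sup>2 + y0\<^sup>2 = 1" using z(1) by (simp add: TQ_def)
  show "t\<^sup>2 * (a*x0 + b*y0) \<le> t * (b*x0 - a*y0)"
    using pert_ineq[OF c z(4)] T[OF pert_TQ[OF z(1), of t]] t by simp
qed

lemma int_zero_B:
  fixes a b c x0 y0 :: real
  assumes B: "\<And>x y. (x,y) \<in> BH \<Longrightarrow> 0 \<le> a*x + b*y + c"
    and z: "(x0,y0) \<in> BH" "0 < y0" "a*x0 + b*y0 + c = 0"
  shows "b*x0 - a*y0 = 0"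
proof (rule zero_deriv)
  show "0 < min (1/2) (y0/4)" using z by simp
  fix t :: real assume t: "\<bar>t\<bar> \<le> min (1/2) (y0/4)"
  have c: "x0\<^sup>2 + y0\<^sup>2 = 1" using z(1) by (simp add: BH_def)
  show "t\<^sup>2 * (a*x0 + b*y0) \<le> t * (b*x0 - a*y0)"
    using pert_ineq[OF c z(3)] B[OF pert_BH[OF z(1), of t]] t by simp
qed


lemma circ_eq:
  fixes x y x0 y0 :: real
  assumes "x\<^sup>2+y\<^sup>2=1" "x0\<^sup>2+y0\<^sup>2=1" "1 \<le> x0*x + y0*y"
  shows "x = x0 \<and> y = y0"
proof -
  have "(x-x0)\<^sup>2 + (y-y0)\<^sup>2 = (x\<^sup>2+y\<^sup>2) + (x0\<^sup>2+y0\<^sup>2) - 2*(x0*x+y0*y)"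
    by (simp add: power2_diff algebra_simps)
  also have "\<dots> = 2 - 2*(x0*x+y0*y)" using assms(1,2) by simp
  finally have eq: "(x-x0)\<^sup>2 + (y-y0)\<^sup>2 = 2 - 2*(x0*x+y0*y)" .
  have "2 - 2*(x0*x+y0*y) \<le> 0" using assms(3) by argo
  then have "(x-x0)\<^sup>2 + (y-y0)\<^sup>2 \<le> 0" by (simp only: eq)
  moreover have "0 \<le> (x-x0)\<^sup>2" "0 \<le> (y-y0)\<^sup>2" by simp_all
  ultimately have "(x-x0)\<^sup>2 = 0" "(y-y0)\<^sup>2 = 0" by linarith+
  then show ?thesis by simp
qed

lemma zero_unique:
  fixes x y x0 y0 m c :: real
  assumes "m < 0" "x\<^sup>2+y\<^sup>2=1" "x0\<^sup>2+y0\<^sup>2=1" "0 \<le> m + c" "m*(x0*x+y0*y) + c = 0"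
  shows "x = x0 \<and> y = y0"
proof -
  have "m*(x0*x+y0*y) \<le> m*1" using assms(4,5) by linarith
  then have "1 \<le> x0*x+y0*y" using assms(1) by (simp add: mult_le_cancel_left_neg)
  then show ?thesis using circ_eq assms(2,3) by blast
qed

definition Zn :: "real^4 \<Rightarrow> (real^4) set" where "Zn n = {g \<in> Gs. n \<bullet> g = 0}"

lemma TQ_pts: "(1,0) \<in> TQ" "(0,1) \<in> TQ" "(3/5,4/5) \<in> TQ"
  by (auto simp: TQ_def power2_eq_square)
lemma BH_pts: "(1,0) \<in> BH" "(-1,0) \<in> BH" "(0,1) \<in> BH"
  by (auto simp: BH_def)
lemma TQ_Gs: "(x,y) \<in> TQ \<Longrightarrow> topP x y \<in> Gs" unfolding Gs_def by force
lemma BH_Gs: "(x,y) \<in> BH \<Longrightarrow> botP x y \<in> Gs" unfolding Gs_def by force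

lemma Gs_cases:
  assumes "g \<in> Gs"
  obtains x y where "(x,y) \<in> TQ" "g = topP x y" | x y where "(x,y) \<in> BH" "g = botP x y"
  using assms unfolding Gs_def by auto

lemma CLASS:
  fixes n :: "real^4"
  assumes nn: "\<And>g. g \<in> Gs \<Longrightarrow> 0 \<le> n \<bullet> g" and pos: "\<exists>g\<in>Gs. 0 < n \<bullet> g"
    and big: "\<And>p q. \<not> Zn n \<subseteq> {p,q}"
  shows "(n$1 = 0 \<and> n$2 = 0 \<and> n$3 + n$4 = 0 \<and> 0 < n$4 - n$3)
       \<or> (n$1 = 0 \<and> n$2 = 0 \<and> n$4 - n$3 = 0 \<and> 0 < n$3 + n$4)
       \<or> (n$1 = 0 \<and> n$3 = 0 \<and> n$4 = 0 \<and> 0 < n$2)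
       \<or> (n$2 = n$1 \<and> n$3 = - n$1 \<and> n$4 = 0 \<and> 0 < n$1)"
proof -
  define a b c1 c2 where "a = n$1" "b = n$2" "c1 = n$3 + n$4" "c2 = n$4 - n$3"
  have ft: "n \<bullet> topP x y = a*x + b*y + c1" for x y unfolding dot_top a_b_c1_c2_def by simp
  have fb: "n \<bullet> botP x y = a*x + b*y + c2" for x y unfolding dot_bot a_b_c1_c2_def by simp
  have T: "0 \<le> a*x + b*y + c1" if "(x,y) \<in> TQ" for x y using nn[OF TQ_Gs[OF that]] ft by simp
  have B: "0 \<le> a*x + b*y + c2" if "(x,y) \<in> BH" for x y using nn[OF BH_Gs[OF that]] fb by simp
  have ZnD: "(\<exists>x y. (x,y)\<in>TQ \<and> g = topP x y \<and> a*x + b*y + c1 = 0) \<or> (\<exists>x y. (x,y)\<in>BH \<and> g = botP x y \<and> a*x+b*y+c2 = 0)"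
    if "g \<in> Zn n" for g
  proof -
    have "g \<in> Gs" "n \<bullet> g = 0" using that by (auto simp: Zn_def)
    then show ?thesis by (cases rule: Gs_cases) (auto simp: ft fb)
  qed
  have ZT: "topP x y \<in> Zn n \<longleftrightarrow> a*x + b*y + c1 = 0" if "(x,y) \<in> TQ" for x y
    using TQ_Gs[OF that] by (simp add: Zn_def ft)
  have ZB: "botP x y \<in> Zn n \<longleftrightarrow> a*x + b*y + c2 = 0" if "(x,y) \<in> BH" for x y
    using BH_Gs[OF that] by (simp add: Zn_def fb)
  show ?thesis
  proof (cases "a = 0 \<and> b = 0")
    case True
    have c1: "0 \<le> c1" using T[OF TQ_pts(1)] True by simp
    have c2: "0 \<le> c2" using B[OF BH_pts(1)] True by simp
    show ?thesis
    proof (cases "c1 = 0")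
      case c10: True
      show ?thesis
      proof (cases "c2 = 0")
        case True
        obtain g where "g \<in> Gs" "0 < n \<bullet> g" using pos by blast
        then show ?thesis using True c10 \<open>a = 0 \<and> b = 0\<close> by (cases rule: Gs_cases) (auto simp: ft fb)
      next
        case False
        then show ?thesis using c10 c2 True unfolding a_b_c1_c2_def by auto
      qed
    next
      case c10: False
      show ?thesis
      proof (cases "c2 = 0")
        case True
        then show ?thesis using c10 c1 \<open>a = 0 \<and> b = 0\<close> unfolding a_b_c1_c2_def by auto
      next
        case False
        have "Zn n \<subseteq> {0, 0}"
        proof
          fix g assume "g \<in> Zn n"
          then show "g \<in> {0,0}" using ZnD[of g] False c10 \<open>a = 0 \<and> b = 0\<close> by auto
        qed
        then show ?thesis using big by blast
      qed
    qed
  next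
    case ab: False
    have ab': "a \<noteq> 0 \<or> b \<noteq> 0" using ab by blast
    have decomp: "a = x0*(a*x0+b*y0) - y0*(b*x0 - a*y0)" "b = y0*(a*x0+b*y0) + x0*(b*x0 - a*y0)"
      if "x0\<^sup>2+y0\<^sup>2 = 1" for x0 y0
    proof -
      have "a = a*(x0\<^sup>2+y0\<^sup>2)" "b = b*(x0\<^sup>2+y0\<^sup>2)" using that by simp_all
      then show "a = x0*(a*x0+b*y0) - y0*(b*x0 - a*y0)" "b = y0*(a*x0+b*y0) + x0*(b*x0 - a*y0)"
        by (simp_all add: power2_eq_square algebra_simps)
    qed
    have lt1: "x0 < 1" if "x0\<^sup>2+y0\<^sup>2 = 1" "0 < y0" for x0 y0 :: real
    proof -
      have "0 < y0\<^sup>2" using that by simp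
      then have "x0\<^sup>2 < 1" using that by argo
      then show ?thesis by (smt (verit) one_le_power)
    qed
    have mneg: "m < 0" if "m \<noteq> 0" "0 \<le> m*(x0 - 1)" "x0 < 1" for m x0 :: real
    proof (rule ccontr)
      assume "\<not> m < 0" then have "0 < m" using that(1) by simp
      then have "m*(x0 - 1) < 0" using that(3) by (simp add: mult_pos_neg)
      then show False using that(2) by simp
    qed
    have noT: "x0 = 0 \<or> y0 = 0" if z: "(x0,y0) \<in> TQ" "a*x0 + b*y0 + c1 = 0" for x0 y0
    proof (rule ccontr)
      assume "\<not> (x0 = 0 \<or> y0 = 0)"
      then have xp: "0 < x0" "0 < y0" using z(1) by (auto simp: TQ_def)
      have u: "x0\<^sup>2+y0\<^sup>2 = 1" using z(1) by (simp add: TQ_def)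
      have k: "b*x0 - a*y0 = 0" using int_zero_T[OF T z(1) xp z(2)] by simp
      define m where "m = a*x0+b*y0"
      have am: "a = m*x0" "b = m*y0" using decomp[OF u] k unfolding m_def by (simp_all add: mult.commute)
      have m0: "m \<noteq> 0" using am ab by auto
      have c1m: "c1 = -m" using z(2) unfolding m_def by simp
      have "0 \<le> m*(x0 - 1)" using T[OF TQ_pts(1)] am c1m by (simp add: algebra_simps)
      then have m: "m < 0" using mneg m0 lt1[OF u xp(2)] by blast
      have "Zn n \<subseteq> {topP x0 y0, botP x0 y0}"
      proof
        fix g assume g: "g \<in> Zn n"
        show "g \<in> {topP x0 y0, botP x0 y0}"
        proof (cases rule: disjE[OF ZnD[OF g]])
          case 1
          then obtain x y where xy: "(x,y)\<in>TQ" "g = topP x y" "a*x + b*y + c1 = 0" by blast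
          have "x = x0 \<and> y = y0"
            by (rule zero_unique[OF m _ u, of _ _ c1]) (use xy c1m am in \<open>auto simp: TQ_def algebra_simps\<close>)
          then show ?thesis using xy by simp
        next
          case 2
          then obtain x y where xy: "(x,y)\<in>BH" "g = botP x y" "a*x + b*y + c2 = 0" by blast
          have bb: "(x0,y0) \<in> BH" using z(1) by (auto simp: TQ_def BH_def)
          have "0 \<le> m + c2" using B[OF bb] unfolding m_def by simp
          then have "x = x0 \<and> y = y0"
            by (intro zero_unique[OF m _ u, of _ _ c2]) (use xy am in \<open>auto simp: BH_def algebra_simps\<close>)
          then show ?thesis using xy by simp
        qed
      qed
      then show False using big by blast
    qed
    have noB: "y0 = 0" if z: "(x0,y0) \<in> BH" "a*x0 + b*y0 + c2 = 0" for x0 y0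
    proof (rule ccontr)
      assume "y0 \<noteq> 0"
      then have yp: "0 < y0" using z(1) by (auto simp: BH_def)
      have u: "x0\<^sup>2+y0\<^sup>2 = 1" using z(1) by (simp add: BH_def)
      have k: "b*x0 - a*y0 = 0" using int_zero_B[OF B z(1) yp z(2)] by simp
      define m where "m = a*x0+b*y0"
      have am: "a = m*x0" "b = m*y0" using decomp[OF u] k unfolding m_def by (simp_all add: mult.commute)
      have m0: "m \<noteq> 0" using am ab by auto
      have c2m: "c2 = -m" using z(2) unfolding m_def by simp
      have "0 \<le> m*(x0 - 1)" using B[OF BH_pts(1)] am c2m by (simp add: algebra_simps)
      then have m: "m < 0" using mneg m0 lt1[OF u yp] by blast
      have botz: "x = x0 \<and> y = y0" if xy: "(x,y)\<in>BH" "a*x + b*y + c2 = 0" for x y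
        by (rule zero_unique[OF m _ u, of _ _ c2]) (use xy c2m am in \<open>auto simp: BH_def algebra_simps\<close>)
      obtain w where topz: "\<And>x y. (x,y)\<in>TQ \<Longrightarrow> a*x + b*y + c1 = 0 \<Longrightarrow> topP x y = w"
      proof (cases "0 \<le> x0")
        case True
        have tt: "(x0,y0) \<in> TQ" using z(1) True by (auto simp: TQ_def BH_def)
        have "0 \<le> m + c1" using T[OF tt] unfolding m_def by simp
        then have "x = x0 \<and> y = y0" if xy: "(x,y)\<in>TQ" "a*x + b*y + c1 = 0" for x y
          by (intro zero_unique[OF m _ u, of _ _ c1]) (use xy am in \<open>auto simp: TQ_def algebra_simps\<close>)
        then show ?thesis using that by blast
      next
        case False
        have h: "0 \<le> m*y0 + c1" using T[OF TQ_pts(2)] am by simp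
        have "x = 0 \<and> y = 1" if xy: "(x,y)\<in>TQ" "a*x + b*y + c1 = 0" for x y
        proof -
          have xy': "x\<^sup>2+y\<^sup>2 = 1" "0 \<le> x" "0 \<le> y" using xy(1) by (auto simp: TQ_def)
          have "m*(x0*x+y0*y) = - c1" using xy(2) am by (simp add: algebra_simps)
          then have "m*(x0*x+y0*y) \<le> m*y0" using h by simp
          then have 1: "y0 \<le> x0*x+y0*y" using m by (simp add: mult_le_cancel_left_neg)
          have 2: "x0*x \<le> 0" using False xy'(2) by (simp add: mult_nonpos_nonneg)
          have "0 \<le> x\<^sup>2" by simp
          then have "y\<^sup>2 \<le> 1" using xy'(1) by argo
          then have "\<bar>y\<bar> \<le> 1" by (simp add: abs_square_le_1)
          then have "y \<le> 1" by simp
          then have 3: "y0*y \<le> y0" using yp by (simp add: mult_left_le)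
          have "x0*x = 0" using 1 2 3 by argo
          then have "x = 0" using False by simp
          then have "y\<^sup>2 = 1" using xy'(1) by simp
          then have "y = 1" using xy'(3) by (smt (verit) one_le_power power2_eq_1_iff)
          then show ?thesis using \<open>x = 0\<close> by simp
        qed
        then show ?thesis using that by blast
      qed
      have "Zn n \<subseteq> {w, botP x0 y0}"
      proof
        fix g assume g: "g \<in> Zn n"
        show "g \<in> {w, botP x0 y0}"
          using ZnD[OF g] topz botz by auto
      qed
      then show False using big by blast
    qed
    define PA PB PC PD where "PA = topP 1 0" "PB = topP 0 1" "PC = botP 1 0" "PD = botP (-1) 0"
    have memb: "g = PA \<or> g = PB \<or> g = PC \<or> g = PD" if g: "g \<in> Zn n" for g
    proof (cases rule: disjE[OF ZnD[OF g]])
      case 1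
      then obtain x y where xy: "(x,y)\<in>TQ" "g = topP x y" "a*x + b*y + c1 = 0" by blast
      have u: "x\<^sup>2 + y\<^sup>2 = 1" "0 \<le> x" "0 \<le> y" using xy(1) by (auto simp: TQ_def)
      have "x = 0 \<or> y = 0" using noT[OF xy(1,3)] .
      then have "(x = 0 \<and> y = 1) \<or> (x = 1 \<and> y = 0)" using u
        by (auto simp: power2_eq_1_iff)
      then show ?thesis using xy unfolding PA_PB_PC_PD_def by auto
    next
      case 2
      then obtain x y where xy: "(x,y)\<in>BH" "g = botP x y" "a*x + b*y + c2 = 0" by blast
      have u: "x\<^sup>2 + y\<^sup>2 = 1" using xy(1) by (auto simp: BH_def)
      have "y = 0" using noB[OF xy(1,3)] .
      then have "x = 1 \<or> x = -1" using u by (simp add: power2_eq_1_iff)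
      then show ?thesis using xy \<open>y = 0\<close> unfolding PA_PB_PC_PD_def by auto
    qed
    have zA: "PA \<in> Zn n \<longleftrightarrow> a + c1 = 0" unfolding PA_PB_PC_PD_def using ZT[OF TQ_pts(1)] by simp
    have zB: "PB \<in> Zn n \<longleftrightarrow> b + c1 = 0" unfolding PA_PB_PC_PD_def using ZT[OF TQ_pts(2)] by simp
    have zC: "PC \<in> Zn n \<longleftrightarrow> a + c2 = 0" unfolding PA_PB_PC_PD_def using ZB[OF BH_pts(1)] by simp
    have zD: "PD \<in> Zn n \<longleftrightarrow> -a + c2 = 0" unfolding PA_PB_PC_PD_def using ZB[OF BH_pts(2)] by simp
    have three: "(PA \<in> Zn n \<and> PB \<in> Zn n \<and> PC \<in> Zn n) \<or> (PA \<in> Zn n \<and> PB \<in> Zn n \<and> PD \<in> Zn n)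
      \<or> (PA \<in> Zn n \<and> PC \<in> Zn n \<and> PD \<in> Zn n) \<or> (PB \<in> Zn n \<and> PC \<in> Zn n \<and> PD \<in> Zn n)"
    proof (rule ccontr)
      assume neg: "\<not> ?thesis"
      have s: "Zn n \<subseteq> {g. (g = PA \<and> PA \<in> Zn n) \<or> (g = PB \<and> PB \<in> Zn n) \<or> (g = PC \<and> PC \<in> Zn n) \<or> (g = PD \<and> PD \<in> Zn n)}"
        using memb by blast
      show False
        using s neg big[of PA PB] big[of PA PC] big[of PA PD] big[of PB PC] big[of PB PD] big[of PC PD]
        by blast
    qed
    have t1: "0 \<le> a*(3/5) + b*(4/5) + c1" using T[OF TQ_pts(3)] .
    have t2: "0 \<le> b + c1" using T[OF TQ_pts(2)] by simp
    have t3: "0 \<le> a + c1" using T[OF TQ_pts(1)] by simp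
    have b1: "0 \<le> a + c2" using B[OF BH_pts(1)] by simp
    have b2: "0 \<le> -a + c2" using B[OF BH_pts(2)] by simp
    have b3: "0 \<le> b + c2" using B[OF BH_pts(3)] by simp
    show ?thesis
      using three unfolding zA zB zC zD
    proof (elim disjE conjE)
      assume "a + c1 = 0" "b + c1 = 0" "a + c2 = 0"
      then show ?thesis using t1 b2 ab by argo
    next
      assume "a + c1 = 0" "b + c1 = 0" "-a + c2 = 0"
      then show ?thesis using b1 ab unfolding a_b_c1_c2_def by argo
    next
      assume "a + c1 = 0" "a + c2 = 0" "-a + c2 = 0"
      then show ?thesis using t2 ab unfolding a_b_c1_c2_def by argo
    next
      assume "b + c1 = 0" "a + c2 = 0" "-a + c2 = 0"
      then show ?thesis using t3 b3 ab by argo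
    qed
  qed
qed


lemma Gs_coords: assumes "g \<in> Gs"
  shows "(g$1)\<^sup>2 + (g$2)\<^sup>2 = 1 \<and> 0 \<le> g$2 \<and> g$4 = 1 \<and> ((g$3 = 1 \<and> 0 \<le> g$1) \<or> g$3 = -1)"
  using assms
proof (cases rule: Gs_cases)
  case (1 x y) then show ?thesis by (simp add: TQ_def topP_def)
next
  case (2 x y) then show ?thesis by (simp add: BH_def botP_def)
qed

lemma Gs_eqI: assumes "g \<in> Gs" "h \<in> Gs" "g$1 = h$1" "g$2 = h$2" "g$3 = h$3" shows "g = h"
  using Gs_coords[OF assms(1)] Gs_coords[OF assms(2)] assms(3-5) by (simp add: vec4_eq)

lemma unit_le1: fixes x y x0 y0 :: real assumes "x\<^sup>2+y\<^sup>2=1" "x0\<^sup>2+y0\<^sup>2=1"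
  shows "x0*x + y0*y \<le> 1"
proof -
  have "0 \<le> (x-x0)\<^sup>2 + (y-y0)\<^sup>2" by simp
  also have "\<dots> = (x\<^sup>2+y\<^sup>2) + (x0\<^sup>2+y0\<^sup>2) - 2*(x0*x+y0*y)"
    by (simp add: power2_diff algebra_simps)
  also have "\<dots> = 2 - 2*(x0*x+y0*y)" using assms by simp
  finally show ?thesis by argo
qed

definition hexp :: "real^4 \<Rightarrow> real^4" where
  "hexp g = vector [-(g$1), -(g$2), -(g$3)/2, 3/2]"

lemma hexp_dot: "hexp g \<bullet> h = 3/2 - (g$1*h$1 + g$2*h$2) - (g$3*h$3)/2 + (3/2)*(h$4 - 1)"
  by (simp add: hexp_def inner4 algebra_simps)

lemma aux_ge0: "(P::real) \<le> 1 \<Longrightarrow> q = 1 \<or> q = -1 \<Longrightarrow> h4 = 1 \<Longrightarrow> 0 \<le> 3/2 - P - q/2 + (3/2)*(h4 - 1)"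
  by auto
lemma aux_eq0: "(P::real) \<le> 1 \<Longrightarrow> q = 1 \<or> q = -1 \<Longrightarrow> h4 = 1 \<Longrightarrow> 0 = 3/2 - P - q/2 + (3/2)*(h4 - 1) \<Longrightarrow> q = 1 \<and> 1 \<le> P"
  by auto

lemma hexp_self: assumes "g \<in> Gs" shows "hexp g \<bullet> g = 0"
proof -
  have c: "(g$1)\<^sup>2 + (g$2)\<^sup>2 = 1" "g$4 = 1" "g$3*g$3 = 1" using Gs_coords[OF assms] by auto
  have "hexp g \<bullet> g = 3/2 - ((g$1)\<^sup>2 + (g$2)\<^sup>2) - (g$3*g$3)/2 + (3/2)*(g$4 - 1)"
    unfolding hexp_dot by (simp add: power2_eq_square)
  then show ?thesis using c by simp
qed

lemma hexp_nonneg: assumes "g \<in> Gs" "h \<in> Gs" shows "0 \<le> hexp g \<bullet> h"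
proof -
  have cg: "(g$1)\<^sup>2 + (g$2)\<^sup>2 = 1" "g$4 = 1" "g$3 = 1 \<or> g$3 = -1" using Gs_coords[OF assms(1)] by auto
  have ch: "(h$1)\<^sup>2 + (h$2)\<^sup>2 = 1" "h$4 = 1" "h$3 = 1 \<or> h$3 = -1" using Gs_coords[OF assms(2)] by auto
  have "g$1*h$1 + g$2*h$2 \<le> 1" using unit_le1[OF ch(1) cg(1)] .
  moreover have "g$3*h$3 = 1 \<or> g$3*h$3 = -1" using cg(3) ch(3) by auto
  ultimately show ?thesis unfolding hexp_dot using ch(2) by (rule aux_ge0)
qed

lemma hexp_pos: assumes "g \<in> Gs" "h \<in> Gs" "g \<noteq> h" shows "0 < hexp g \<bullet> h"
proof (rule ccontr)
  assume "\<not> 0 < hexp g \<bullet> h"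
  then have z: "hexp g \<bullet> h = 0" using hexp_nonneg[OF assms(1,2)] by simp
  have cg: "(g$1)\<^sup>2 + (g$2)\<^sup>2 = 1" "g$4 = 1" "g$3 = 1 \<or> g$3 = -1" using Gs_coords[OF assms(1)] by auto
  have ch: "(h$1)\<^sup>2 + (h$2)\<^sup>2 = 1" "h$4 = 1" "h$3 = 1 \<or> h$3 = -1" using Gs_coords[OF assms(2)] by auto
  have le: "g$1*h$1 + g$2*h$2 \<le> 1" using unit_le1[OF ch(1) cg(1)] .
  have q: "g$3*h$3 = 1 \<or> g$3*h$3 = -1" using cg(3) ch(3) by auto
  have r: "g$3*h$3 = 1 \<and> 1 \<le> g$1*h$1 + g$2*h$2" using aux_eq0[OF le q ch(2)] z unfolding hexp_dot by simp
  then have "g$3 = h$3" using cg(3) ch(3) by auto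
  moreover have "1 \<le> g$1*h$1 + g$2*h$2" using r by simp
  then have "h$1 = g$1 \<and> h$2 = g$2" using circ_eq[OF ch(1) cg(1)] by blast
  ultimately show False using Gs_eqI[OF assms(1,2)] assms(3) by auto
qed

lemma span_agree:
  assumes "\<And>z. z \<in> B \<Longrightarrow> u \<bullet> z = s \<bullet> z" "x \<in> span B"
  shows "u \<bullet> x = s \<bullet> x"
proof -
  have "span B \<subseteq> {x. (u - s) \<bullet> x = 0}"
    by (rule span_minimal) (use assms(1) subspace_hyperplane[of "u - s"] in \<open>auto simp: inner_diff_left\<close>)
  then show ?thesis using assms(2) by (auto simp: inner_diff_left)
qed

lemma unit_abs: assumes "x\<^sup>2+y\<^sup>2=(1::real)" shows "\<bar>x\<bar> \<le> 1" "\<bar>y\<bar> \<le> 1"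
proof -
  have "0 \<le> x\<^sup>2" "0 \<le> y\<^sup>2" by simp_all
  then have "x\<^sup>2 \<le> 1" "y\<^sup>2 \<le> 1" using assms by argo+
  then show "\<bar>x\<bar> \<le> 1" "\<bar>y\<bar> \<le> 1" by (simp_all add: abs_square_le_1)
qed

lemma top_sum_ge1: fixes x y :: real assumes "x\<^sup>2+y\<^sup>2=1" "0 \<le> x" "0 \<le> y" shows "1 \<le> x + y"
proof -
  have "x \<le> 1" "y \<le> 1" using unit_abs[OF assms(1)] by auto
  then have "x\<^sup>2 \<le> x" "y\<^sup>2 \<le> y" using assms(2,3) by (simp_all add: power2_eq_square mult_left_le)
  then show ?thesis using assms(1) by argo
qed

lemma s_bound: assumes "g \<in> Gs" shows "- (\<bar>s$1\<bar> + \<bar>s$2\<bar> + \<bar>s$3\<bar> + \<bar>s$4\<bar>) \<le> s \<bullet> g"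
proof -
  have c: "(g$1)\<^sup>2 + (g$2)\<^sup>2 = 1" "g$4 = 1" "g$3 = 1 \<or> g$3 = -1" using Gs_coords[OF assms] by auto
  have a: "\<bar>g$1\<bar> \<le> 1" "\<bar>g$2\<bar> \<le> 1" "\<bar>g$3\<bar> \<le> 1" "\<bar>g$4\<bar> \<le> 1" using unit_abs[OF c(1)] c(2,3) by auto
  have "\<bar>s$i * g$i\<bar> \<le> \<bar>s$i\<bar>" if "\<bar>g$i\<bar> \<le> 1" for i
    using that by (simp add: abs_mult mult_left_le)
  then have "\<bar>s$1 * g$1\<bar> \<le> \<bar>s$1\<bar>" "\<bar>s$2 * g$2\<bar> \<le> \<bar>s$2\<bar>" "\<bar>s$3 * g$3\<bar> \<le> \<bar>s$3\<bar>" "\<bar>s$4 * g$4\<bar> \<le> \<bar>s$4\<bar>"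
    using a by auto
  then show ?thesis unfolding inner4 by linarith
qed


definition PA :: "real^4" where "PA = topP 1 0"
definition PB :: "real^4" where "PB = topP 0 1"
definition PC :: "real^4" where "PC = botP 1 0"
definition PD :: "real^4" where "PD = botP (-1) 0"

lemma P_Gs: "PA \<in> Gs" "PB \<in> Gs" "PC \<in> Gs" "PD \<in> Gs"
  unfolding PA_def PB_def PC_def PD_def using TQ_Gs[OF TQ_pts(1)] TQ_Gs[OF TQ_pts(2)] BH_Gs[OF BH_pts(1)] BH_Gs[OF BH_pts(2)]
  by auto

lemma l_nonneg_all:
  assumes "g \<in> Gs"
  shows "0 \<le> vector [0,0,1,1] \<bullet> g \<and> 0 \<le> vector [1,1,-1,0] \<bullet> g \<and> 0 \<le> vector [-1,0,0,1] \<bullet> g \<and>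
    0 \<le> vector [2,0,-1,1] \<bullet> g \<and> 0 \<le> vector [0,1,0,0] \<bullet> g \<and> 0 \<le> vector [0,0,-1,1] \<bullet> g"
  using assms
proof (cases rule: Gs_cases)
  case (1 x y)
  then have u: "x\<^sup>2+y\<^sup>2=1" "0 \<le> x" "0 \<le> y" by (auto simp: TQ_def)
  have "x \<le> 1" using unit_abs[OF u(1)] by simp
  moreover have "1 \<le> x + y" using top_sum_ge1[OF u] .
  ultimately show ?thesis using 1 u by (simp add: dot_top)
next
  case (2 x y)
  then have u: "x\<^sup>2+y\<^sup>2=1" "0 \<le> y" by (auto simp: BH_def)
  have "\<bar>x\<bar> \<le> 1" using unit_abs[OF u(1)] by simp
  then show ?thesis using 2 u by (simp add: dot_bot abs_le_iff)
qed

lemmas l_nonneg = l_nonneg_all[THEN conjunct1] l_nonneg_all[THEN conjunct2, THEN conjunct1]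
  l_nonneg_all[THEN conjunct2, THEN conjunct2, THEN conjunct1]
  l_nonneg_all[THEN conjunct2, THEN conjunct2, THEN conjunct2, THEN conjunct1]
  l_nonneg_all[THEN conjunct2, THEN conjunct2, THEN conjunct2, THEN conjunct2, THEN conjunct1]
  l_nonneg_all[THEN conjunct2, THEN conjunct2, THEN conjunct2, THEN conjunct2, THEN conjunct2]

lemma e4_dot: "g \<in> Gs \<Longrightarrow> vector [0,0,0,1] \<bullet> g = 1"
  using Gs_coords[of g] by (simp add: inner4)

lemma EXT:
  assumes Zs: "Z \<subseteq> Gs"
    and P2: "\<And>g. g \<in> Gs \<Longrightarrow> g \<in> span Z \<Longrightarrow> g \<in> Z"
    and P4: "\<And>a b \<alpha> \<beta>. a \<in> Gs \<Longrightarrow> b \<in> Gs \<Longrightarrow> 0 < \<alpha> \<Longrightarrow> 0 < \<beta> \<Longrightarrow> \<alpha> *\<^sub>R a + \<beta> *\<^sub>R b \<in> span Z \<Longrightarrow> a \<in> Z"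
    and P3: "\<exists>g\<in>Gs. g \<notin> Z"
    and sZ: "\<And>z. z \<in> Z \<Longrightarrow> 0 \<le> s \<bullet> z"
  shows "\<exists>u. (\<forall>g\<in>Gs. 0 \<le> u \<bullet> g) \<and> (\<forall>x\<in>span Z. u \<bullet> x = s \<bullet> x)"
proof -
  obtain B where B: "B \<subseteq> Z" "independent B" "Z \<subseteq> span B" "card B = dim Z" by (rule basis_exists)
  have spanZB: "span Z = span B" unfolding span_eq using B(1,3) span_superset by blast
  have fin: "finite B" using B(2) by (rule finiteI_independent)
  have dimle: "dim Z \<le> 4" using dim_subset_UNIV[of Z] by simp
  consider "card B = 0" | "card B = 1" | "card B = 2" | "card B = 3" | "card B = 4"
    using dimle B(4) by linarith
  then show ?thesis
  proof cases
    case 1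
    then have "B = {}" using fin by simp
    then have "span Z = {0}" using spanZB by simp
    then show ?thesis by (intro exI[of _ 0]) auto
  next
    case 2
    then obtain p where p: "B = {p}" by (rule card_1_singletonE)
    have pZ: "p \<in> Z" using B(1) p by auto
    have pG: "p \<in> Gs" using pZ Zs by auto
    define u where "u = (s \<bullet> p) *\<^sub>R (vector [0,0,0,1] :: real^4)"
    have ug: "u \<bullet> g = s \<bullet> p" if "g \<in> Gs" for g using e4_dot[OF that] by (simp add: u_def)
    show ?thesis
    proof (intro exI[of _ u] conjI ballI)
      fix g assume "g \<in> Gs" then show "0 \<le> u \<bullet> g" using ug sZ[OF pZ] by simp
    next
      fix x assume "x \<in> span Z"
      then have "x \<in> span B" using spanZB by simp
      then show "u \<bullet> x = s \<bullet> x" by (rule span_agree[rotated]) (use p ug[OF pG] in simp)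
    qed
  next
    case 3
    then obtain p q where pq: "B = {p,q}" "p \<noteq> q" by (auto simp: card_2_iff)
    have pZ: "p \<in> Z" "q \<in> Z" using B(1) pq by auto
    have pG: "p \<in> Gs" "q \<in> Gs" using pZ Zs by auto
    have h1: "0 < hexp q \<bullet> p" using hexp_pos[OF pG(2) pG(1)] pq(2) by simp
    have h2: "0 < hexp p \<bullet> q" using hexp_pos[OF pG(1) pG(2)] pq(2) by simp
    define u where "u = (s \<bullet> p / (hexp q \<bullet> p)) *\<^sub>R hexp q + (s \<bullet> q / (hexp p \<bullet> q)) *\<^sub>R hexp p"
    have up: "u \<bullet> p = s \<bullet> p" using h1 hexp_self[OF pG(1)] by (simp add: u_def inner_add_left)
    have uq: "u \<bullet> q = s \<bullet> q" using h2 hexp_self[OF pG(2)] by (simp add: u_def inner_add_left)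
    show ?thesis
    proof (intro exI[of _ u] conjI ballI)
      fix g assume g: "g \<in> Gs"
      have "0 \<le> (s \<bullet> p / (hexp q \<bullet> p)) * (hexp q \<bullet> g)"
        using sZ[OF pZ(1)] h1 hexp_nonneg[OF pG(2) g] by simp
      moreover have "0 \<le> (s \<bullet> q / (hexp p \<bullet> q)) * (hexp p \<bullet> g)"
        using sZ[OF pZ(2)] h2 hexp_nonneg[OF pG(1) g] by simp
      ultimately show "0 \<le> u \<bullet> g" by (simp add: u_def inner_add_left)
    next
      fix x assume "x \<in> span Z"
      then have "x \<in> span B" using spanZB by simp
      then show "u \<bullet> x = s \<bullet> x" by (rule span_agree[rotated]) (use pq up uq in auto)
    qed
  next
    case 4
    then have dim3: "dim Z = 3" using B(4) by simp
    then have dl: "dim Z < DIM(real^4)" by simp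
    obtain n :: "real^4" where n: "n \<noteq> 0" "\<And>y. y \<in> span Z \<Longrightarrow> orthogonal n y"
      using orthogonal_to_subspace_exists[OF dl] by blast
    have sub: "span Z \<subseteq> {x. n \<bullet> x = 0}" using n(2) by (auto simp: orthogonal_def)
    have hyp: "span Z = {x. n \<bullet> x = 0}"
    proof (rule subspace_dim_equal)
      show "subspace (span Z)" by simp
      show "subspace {x. n \<bullet> x = 0}" by (rule subspace_hyperplane)
      show "span Z \<subseteq> {x. n \<bullet> x = 0}" by (rule sub)
      show "dim {x. n \<bullet> x = 0} \<le> dim (span Z)" using dim_hyperplane[OF n(1)] dim3 by simp
    qed
    have sign: "(\<forall>g\<in>Gs. 0 \<le> n \<bullet> g) \<or> (\<forall>g\<in>Gs. n \<bullet> g \<le> 0)"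
    proof (rule ccontr)
      assume "\<not> ?thesis"
      then obtain g1 g2 where g: "g1 \<in> Gs" "n \<bullet> g1 < 0" "g2 \<in> Gs" "0 < n \<bullet> g2"
        by (auto simp: not_le)
      have "n \<bullet> ((- (n \<bullet> g1)) *\<^sub>R g2 + (n \<bullet> g2) *\<^sub>R g1) = 0"
        by (simp add: inner_add_right inner_diff_right algebra_simps)
      then have "(- (n \<bullet> g1)) *\<^sub>R g2 + (n \<bullet> g2) *\<^sub>R g1 \<in> span Z" using hyp by simp
      then have "g2 \<in> Z" using P4[OF g(3) g(1), of "- (n \<bullet> g1)" "n \<bullet> g2"] g(2,4) by simp
      then have "n \<bullet> g2 = 0" using hyp span_superset by blast
      then show False using g(4) by simp
    qed
    obtain m :: "real^4" where m: "m \<noteq> 0" "span Z = {x. m \<bullet> x = 0}" "\<And>g. g \<in> Gs \<Longrightarrow> 0 \<le> m \<bullet> g"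
    proof (cases "\<forall>g\<in>Gs. 0 \<le> n \<bullet> g")
      case True then show ?thesis using that[of n] n(1) hyp by blast
    next
      case False
      then have "\<forall>g\<in>Gs. n \<bullet> g \<le> 0" using sign by blast
      moreover have "{x. (-n) \<bullet> x = 0} = {x. n \<bullet> x = 0}" by auto
      ultimately show ?thesis using that[of "-n"] n(1) hyp by auto
    qed
    have zeroZ: "g \<in> Z \<longleftrightarrow> g \<in> Gs \<and> m \<bullet> g = 0" for g
      using P2[of g] Zs m(2) span_superset[of Z] by blast
    have ZnZ: "Zn m = Z" unfolding Zn_def using zeroZ by blast
    have pos: "\<exists>g\<in>Gs. 0 < m \<bullet> g"
    proof -
      obtain g where g: "g \<in> Gs" "g \<notin> Z" using P3 by blast
      then have "m \<bullet> g \<noteq> 0" using zeroZ by blast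
      then show ?thesis using m(3)[OF g(1)] g(1) by (intro bexI[of _ g]) auto
    qed
    have big: "\<not> Zn m \<subseteq> {p,q}" for p q
    proof
      assume "Zn m \<subseteq> {p,q}"
      then have "Z \<subseteq> span {p,q}" using ZnZ span_superset by blast
      then have "dim Z \<le> card {p,q}" by (rule dim_le_card) simp
      also have "\<dots> \<le> 2" by (cases "p = q") auto
      finally show False using dim3 by simp
    qed
    have agree_on: "\<exists>u. (\<forall>g\<in>Gs. 0 \<le> u \<bullet> g) \<and> (\<forall>x\<in>span Z. u \<bullet> x = s \<bullet> x)"
      if "\<forall>g\<in>Gs. 0 \<le> u \<bullet> g" "\<forall>z\<in>Z. u \<bullet> z = s \<bullet> z" for u
      using that span_agree[of Z u s] by blast
    have lam: "\<exists>u. (\<forall>g\<in>Gs. 0 \<le> u \<bullet> g) \<and> (\<forall>x\<in>span Z. u \<bullet> x = s \<bullet> x)"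
      if d: "0 < d" "\<And>g. g \<in> Gs \<Longrightarrow> m \<bullet> g = 0 \<or> m \<bullet> g = d" for d
    proof -
      define S where "S = \<bar>s$1\<bar> + \<bar>s$2\<bar> + \<bar>s$3\<bar> + \<bar>s$4\<bar>"
      define u where "u = s + (S / d) *\<^sub>R m"
      show ?thesis
      proof (intro exI[of _ u] conjI ballI)
        fix g assume g: "g \<in> Gs"
        show "0 \<le> u \<bullet> g"
        proof (cases "m \<bullet> g = 0")
          case True
          then have "g \<in> Z" using zeroZ g by blast
          then show ?thesis using sZ True by (simp add: u_def inner_add_left)
        next
          case False
          then have "m \<bullet> g = d" using d(2)[OF g] by blast
          then have "u \<bullet> g = s \<bullet> g + S" using d(1) by (simp add: u_def inner_add_left)
          then show ?thesis using s_bound[OF g, of s] unfolding S_def by simp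
        qed
      next
        fix x assume "x \<in> span Z"
        then have "m \<bullet> x = 0" using m(2) by simp
        then show "u \<bullet> x = s \<bullet> x" by (simp add: u_def inner_add_left)
      qed
    qed
    have PZ: "p \<in> Z" if "p \<in> Gs" "m \<bullet> p = 0" for p using zeroZ that by blast
    from CLASS[OF m(3) pos big]
    consider (T) "m$1 = 0 \<and> m$2 = 0 \<and> m$3 + m$4 = 0 \<and> 0 < m$4 - m$3"
      | (Bt) "m$1 = 0 \<and> m$2 = 0 \<and> m$4 - m$3 = 0 \<and> 0 < m$3 + m$4"
      | (Tr1) "m$1 = 0 \<and> m$3 = 0 \<and> m$4 = 0 \<and> 0 < m$2"
      | (Tr2) "m$2 = m$1 \<and> m$3 = - m$1 \<and> m$4 = 0 \<and> 0 < m$1"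
      by blast
    then show ?thesis
    proof cases
      case T
      show ?thesis
      proof (rule lam)
        show "0 < m$4 - m$3" using T by simp
        fix g assume "g \<in> Gs"
        then show "m \<bullet> g = 0 \<or> m \<bullet> g = m$4 - m$3"
          by (cases rule: Gs_cases) (use T in \<open>auto simp: dot_top dot_bot\<close>)
      qed
    next
      case Bt
      show ?thesis
      proof (rule lam)
        show "0 < m$3 + m$4" using Bt by simp
        fix g assume "g \<in> Gs"
        then show "m \<bullet> g = 0 \<or> m \<bullet> g = m$3 + m$4"
          by (cases rule: Gs_cases) (use Bt in \<open>auto simp: dot_top dot_bot\<close>)
      qed
    next
      case Tr1
      have mz: "m \<bullet> PA = 0" "m \<bullet> PC = 0" "m \<bullet> PD = 0"
        using Tr1 by (simp_all add: PA_def PC_def PD_def dot_top dot_bot)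
      have inZ: "PA \<in> Z" "PC \<in> Z" "PD \<in> Z" using PZ P_Gs mz by auto
      have Zsub: "z = PA \<or> z = PC \<or> z = PD" if "z \<in> Z" for z
      proof -
        have zg: "z \<in> Gs" "m \<bullet> z = 0" using zeroZ that by auto
        from zg(1) show ?thesis
        proof (cases rule: Gs_cases)
          case (1 x y)
          then have "y = 0" using zg(2) Tr1 by (simp add: dot_top)
          then have "x = 1" using 1(1) by (auto simp: TQ_def power2_eq_1_iff)
          then show ?thesis using 1 \<open>y = 0\<close> by (simp add: PA_def)
        next
          case (2 x y)
          then have "y = 0" using zg(2) Tr1 by (simp add: dot_bot)
          then have "x = 1 \<or> x = -1" using 2(1) by (auto simp: BH_def power2_eq_1_iff)
          then show ?thesis using 2 \<open>y = 0\<close> by (auto simp: PC_def PD_def)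
        qed
      qed
      define u where "u = ((s \<bullet> PA)/2) *\<^sub>R (vector [0,0,1,1] :: real^4) + ((s \<bullet> PC)/2) *\<^sub>R (vector [1,1,-1,0] :: real^4)
         + ((s \<bullet> PD)/2) *\<^sub>R (vector [-1,0,0,1] :: real^4)"
      show ?thesis
      proof (rule agree_on)
        show "\<forall>g\<in>Gs. 0 \<le> u \<bullet> g"
        proof
          fix g assume g: "g \<in> Gs"
          have "0 \<le> ((s \<bullet> PA)/2) * (vector [0,0,1,1] \<bullet> g)" using sZ[OF inZ(1)] l_nonneg(1)[OF g] by simp
          moreover have "0 \<le> ((s \<bullet> PC)/2) * (vector [1,1,-1,0] \<bullet> g)" using sZ[OF inZ(2)] l_nonneg(2)[OF g] by simp
          moreover have "0 \<le> ((s \<bullet> PD)/2) * (vector [-1,0,0,1] \<bullet> g)" using sZ[OF inZ(3)] l_nonneg(3)[OF g] by simp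
          ultimately show "0 \<le> u \<bullet> g" by (simp add: u_def inner_add_left)
        qed
        show "\<forall>z\<in>Z. u \<bullet> z = s \<bullet> z"
        proof
          fix z assume "z \<in> Z"
          from Zsub[OF this] show "u \<bullet> z = s \<bullet> z"
            by (elim disjE) (simp_all add: u_def inner_add_left PA_def PC_def PD_def topP_def botP_def inner4 field_simps)
        qed
      qed
    next
      case Tr2
      have mz: "m \<bullet> PA = 0" "m \<bullet> PB = 0" "m \<bullet> PD = 0"
        using Tr2 by (simp_all add: PA_def PB_def PD_def dot_top dot_bot)
      have inZ: "PA \<in> Z" "PB \<in> Z" "PD \<in> Z" using PZ P_Gs mz by auto
      have Zsub: "z = PA \<or> z = PB \<or> z = PD" if "z \<in> Z" for z
      proof -
        have zg: "z \<in> Gs" "m \<bullet> z = 0" using zeroZ that by auto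
        from zg(1) show ?thesis
        proof (cases rule: Gs_cases)
          case (1 x y)
          then have u: "x\<^sup>2+y\<^sup>2=1" "0 \<le> x" "0 \<le> y" by (auto simp: TQ_def)
          have "m$1 * (x + y - 1) = 0" using zg(2) Tr2 1 by (simp add: dot_top algebra_simps)
          then have s1: "x + y = 1" using Tr2 by simp
          then have "(x+y)\<^sup>2 = 1" by simp
          then have "x * y = 0" using u(1) by (simp add: power2_sum)
          then have "(x = 0 \<and> y = 1) \<or> (x = 1 \<and> y = 0)" using s1 by auto
          then show ?thesis using 1 by (auto simp: PA_def PB_def)
        next
          case (2 x y)
          then have u: "x\<^sup>2+y\<^sup>2=1" "0 \<le> y" by (auto simp: BH_def)
          have "\<bar>x\<bar> \<le> 1" using unit_abs[OF u(1)] by simp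
          have "m$1 * (x + y + 1) = 0" using zg(2) Tr2 2 by (simp add: dot_bot algebra_simps)
          then have "x + y = -1" using Tr2 by simp
          then have "x = -1 \<and> y = 0" using u(2) \<open>\<bar>x\<bar> \<le> 1\<close> by (simp add: abs_le_iff)
          then show ?thesis using 2 by (auto simp: PD_def)
        qed
      qed
      define u where "u = ((s \<bullet> PA)/2) *\<^sub>R (vector [2,0,-1,1] :: real^4) + (s \<bullet> PB) *\<^sub>R (vector [0,1,0,0] :: real^4)
         + ((s \<bullet> PD)/2) *\<^sub>R (vector [0,0,-1,1] :: real^4)"
      show ?thesis
      proof (rule agree_on)
        show "\<forall>g\<in>Gs. 0 \<le> u \<bullet> g"
        proof
          fix g assume g: "g \<in> Gs"
          have "0 \<le> ((s \<bullet> PA)/2) * (vector [2,0,-1,1] \<bullet> g)" using sZ[OF inZ(1)] l_nonneg(4)[OF g] by simp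
          moreover have "0 \<le> (s \<bullet> PB) * (vector [0,1,0,0] \<bullet> g)" using sZ[OF inZ(2)] l_nonneg(5)[OF g] by simp
          moreover have "0 \<le> ((s \<bullet> PD)/2) * (vector [0,0,-1,1] \<bullet> g)" using sZ[OF inZ(3)] l_nonneg(6)[OF g] by simp
          ultimately show "0 \<le> u \<bullet> g" by (simp add: u_def inner_add_left)
        qed
        show "\<forall>z\<in>Z. u \<bullet> z = s \<bullet> z"
        proof
          fix z assume "z \<in> Z"
          from Zsub[OF this] show "u \<bullet> z = s \<bullet> z"
            by (elim disjE) (simp_all add: u_def inner_add_left PA_def PB_def PD_def topP_def botP_def inner4 field_simps)
        qed
      qed
    qed
  next
    case 5
    then have "dim Z = DIM(real^4)" using B(4) by simp
    then have "span Z = UNIV" by (simp only: dim_eq_full)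
    then show ?thesis using P2 P3 by blast
  qed
qed


context KF begin

lemma F_sumc: "finite S \<Longrightarrow> (\<And>i. i \<in> S \<Longrightarrow> f i \<in> F) \<Longrightarrow> sum f S \<in> F"
  by (induction S rule: finite_induct) (auto simp: zeroF F_add)

lemma Gs_not_sub: assumes "F \<noteq> exK" shows "\<exists>g\<in>Gs. g \<notin> Gs \<inter> F"
proof (rule ccontr)
  assume "\<not> ?thesis"
  then have GF: "Gs \<subseteq> F" by blast
  have "exK \<subseteq> F"
  proof
    fix x assume "x \<in> exK"
    then obtain S c where S: "finite S" "S \<subseteq> Gs" "\<And>g. g \<in> S \<Longrightarrow> 0 \<le> c g" "x = (\<Sum>g\<in>S. c g *\<^sub>R g)"
      using K_repr by blast
    show "x \<in> F" unfolding S(4) using S GF by (intro F_sumc) (auto intro!: F_scale)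
  qed
  then show False using assms FsubK by blast
qed

lemma closed_main: assumes "F \<noteq> exK"
  shows "closed {u + v | u v. u \<in> dual_cone exK \<and> v \<in> perp F}"
proof -
  define Z where "Z = Gs \<inter> F"
  have eq: "{u + v | u v. u \<in> dual_cone exK \<and> v \<in> perp F} = {s. \<forall>x\<in>F. 0 \<le> s \<bullet> x}"
  proof
    show "{u + v | u v. u \<in> dual_cone exK \<and> v \<in> perp F} \<subseteq> {s. \<forall>x\<in>F. 0 \<le> s \<bullet> x}"
      using FsubK by (auto simp: dual_cone_def perp_def inner_add_left)
  next
    show "{s. \<forall>x\<in>F. 0 \<le> s \<bullet> x} \<subseteq> {u + v | u v. u \<in> dual_cone exK \<and> v \<in> perp F}"
    proof
      fix s assume s: "s \<in> {s. \<forall>x\<in>F. 0 \<le> s \<bullet> x}"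
      have "\<exists>u. (\<forall>g\<in>Gs. 0 \<le> u \<bullet> g) \<and> (\<forall>x\<in>span Z. u \<bullet> x = s \<bullet> x)"
      proof (rule EXT)
        show "Z \<subseteq> Gs" by (simp add: Z_def)
        show "g \<in> Z" if "g \<in> Gs" "g \<in> span Z" for g
        proof -
          have "g \<in> span F" using that(2) span_mono[of Z F] by (auto simp: Z_def)
          then show ?thesis using F_span that(1) Gs_sub_K by (auto simp: Z_def)
        qed
        show "a \<in> Z" if "a \<in> Gs" "b \<in> Gs" "0 < \<alpha>" "0 < \<beta>" "\<alpha> *\<^sub>R a + \<beta> *\<^sub>R b \<in> span Z" for a b \<alpha> \<beta>
        proof -
          have ab: "a \<in> exK" "b \<in> exK" using that Gs_sub_K by auto
          have "\<alpha> *\<^sub>R a + \<beta> *\<^sub>R b \<in> exK" using ab that(3,4) by (intro K_add K_scale) auto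
          moreover have "\<alpha> *\<^sub>R a + \<beta> *\<^sub>R b \<in> span F" using that(5) span_mono[of Z F] by (auto simp: Z_def)
          ultimately have "\<alpha> *\<^sub>R a + \<beta> *\<^sub>R b \<in> F" by (rule F_span)
          then have "a \<in> F" using F_gen[OF ab(1) K_scale[OF ab(2), of \<beta>] that(3)] that(4) by simp
          then show ?thesis using that(1) by (simp add: Z_def)
        qed
        show "\<exists>g\<in>Gs. g \<notin> Z" using Gs_not_sub[OF assms] by (simp add: Z_def)
        show "0 \<le> s \<bullet> z" if "z \<in> Z" for z using s that by (auto simp: Z_def)
      qed
      then obtain u where u: "\<forall>g\<in>Gs. 0 \<le> u \<bullet> g" "\<forall>x\<in>span Z. u \<bullet> x = s \<bullet> x" by blast
      have "u \<in> dual_cone exK" unfolding dual_cone_def using K_dual u(1) by blast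
      moreover have "s - u \<in> perp F"
        unfolding perp_def using u(2) F_sub_spanZ by (auto simp: Z_def inner_diff_left)
      moreover have "s = u + (s - u)" by simp
      ultimately show "s \<in> {u + v | u v. u \<in> dual_cone exK \<and> v \<in> perp F}" by blast
    qed
  qed
  have "{s. \<forall>x\<in>F. 0 \<le> s \<bullet> x} = (\<Inter>x\<in>F. {s. x \<bullet> s \<ge> 0})" by (auto simp: inner_commute)
  moreover have "closed (\<Inter>x\<in>F. {s. x \<bullet> s \<ge> 0})" by (intro closed_INT ballI closed_halfspace_ge)
  ultimately show ?thesis using eq by simp
qed

end

theorem FDC: "facially_dual_complete exK"
  unfolding facially_dual_complete_def
proof (intro allI impI)
  fix F assume F: "pface F exK \<and> F \<noteq> {} \<and> F \<noteq> exK"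
  interpret KF F using F by unfold_locales (auto simp: pface_def)
  show "closed {u + v | u v. u \<in> dual_cone exK \<and> v \<in> perp F}" using closed_main F by blast
qed


definition Sdir :: "'a::real_normed_vector \<Rightarrow> 'a set \<Rightarrow> 'a set" where
  "Sdir x D = {d. \<exists>e>0. x + e *\<^sub>R d \<in> D}"

lemma tcone_Sdir: "tcone x D = closure (Sdir x D)"
  by (simp add: tcone_def Sdir_def)

lemma Sdir_sub: "Sdir x D \<subseteq> tcone x D"
  unfolding tcone_Sdir by (rule closure_subset)

lemma SdirI: "0 < e \<Longrightarrow> x + e *\<^sub>R d \<in> D \<Longrightarrow> d \<in> Sdir x D"
  unfolding Sdir_def by blast

lemma convex_Sdir:
  assumes "convex D" "x \<in> D"
  shows "convex (Sdir x D)"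
  unfolding convex_def
proof (intro allI impI ballI)
  fix d1 d2 and u v :: real
  assume d: "d1 \<in> Sdir x D" "d2 \<in> Sdir x D" and uv: "0 \<le> u" "0 \<le> v" "u + v = 1"
  obtain e1 e2 where e: "0 < e1" "x + e1 *\<^sub>R d1 \<in> D" "0 < e2" "x + e2 *\<^sub>R d2 \<in> D" using d unfolding Sdir_def by blast
  define e where "e = min e1 e2"
  have ep: "0 < e" using e by (simp add: e_def)
  have seg: "x + e *\<^sub>R d \<in> D" if "0 < e'" "x + e' *\<^sub>R d \<in> D" "e \<le> e'" for d e'
  proof -
    have "x + e *\<^sub>R d = (1 - e/e') *\<^sub>R x + (e/e') *\<^sub>R (x + e' *\<^sub>R d)"
      using that(1) by (simp add: algebra_simps)
    moreover have "0 \<le> e/e'" "e/e' \<le> 1" using that(1,3) ep by auto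
    ultimately show ?thesis using convexD[OF assms(1) assms(2) that(2), of "1 - e/e'" "e/e'"] by simp
  qed
  have "x + e *\<^sub>R d1 \<in> D" "x + e *\<^sub>R d2 \<in> D" using seg e by (auto simp: e_def)
  then have "u *\<^sub>R (x + e *\<^sub>R d1) + v *\<^sub>R (x + e *\<^sub>R d2) \<in> D" using convexD[OF assms(1)] uv by blast
  moreover have "u *\<^sub>R (x + e *\<^sub>R d1) + v *\<^sub>R (x + e *\<^sub>R d2) = x + e *\<^sub>R (u *\<^sub>R d1 + v *\<^sub>R d2)"
    using uv(3) by (simp add: algebra_simps flip: scaleR_add_left)
  ultimately show "u *\<^sub>R d1 + v *\<^sub>R d2 \<in> Sdir x D" using ep unfolding Sdir_def by auto
qed

lemma convex_tcone: "convex D \<Longrightarrow> x \<in> D \<Longrightarrow> convex (tcone x D)"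
  unfolding tcone_Sdir by (intro convex_closure convex_Sdir)

lemma closed_tcone: "closed (tcone x D)" unfolding tcone_def by simp

lemma tcone_halfspace:
  fixes a :: "'a::euclidean_space"
  assumes "\<And>p. p \<in> D \<Longrightarrow> a \<bullet> p \<le> b" "a \<bullet> x = b" "d \<in> tcone x D"
  shows "a \<bullet> d \<le> 0"
proof -
  have "Sdir x D \<subseteq> {d. a \<bullet> d \<le> 0}"
  proof
    fix d assume "d \<in> Sdir x D"
    then obtain e where e: "0 < e" "x + e *\<^sub>R d \<in> D" unfolding Sdir_def by blast
    then have "a \<bullet> (x + e *\<^sub>R d) \<le> b" using assms(1) by blast
    then have "a \<bullet> x + e * (a \<bullet> d) \<le> b" by (simp add: inner_add_right)
    then have "e * (a \<bullet> d) \<le> 0" using assms(2) by simp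
    then show "d \<in> {d. a \<bullet> d \<le> 0}" using e(1) by (simp add: mult_le_0_iff)
  qed
  then have "tcone x D \<subseteq> {d. a \<bullet> d \<le> 0}" unfolding tcone_Sdir
    by (rule closure_minimal) (rule closed_halfspace_le)
  then show ?thesis using assms(3) by blast
qed

lemma eps_le0:
  fixes p c :: real
  assumes "\<And>\<epsilon>. 0 < \<epsilon> \<Longrightarrow> p \<le> \<epsilon> * c"
  shows "p \<le> 0"
proof (rule ccontr)
  assume "\<not> p \<le> 0"
  then have p: "0 < p" by simp
  define \<epsilon> where "\<epsilon> = p / (\<bar>c\<bar> + 1)"
  have ep: "0 < \<epsilon>" using p by (simp add: \<epsilon>_def)
  have "\<epsilon> * c \<le> \<epsilon> * \<bar>c\<bar>" using ep by (simp add: mult_left_mono)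
  also have "\<dots> < \<epsilon> * (\<bar>c\<bar> + 1)" using ep by simp
  also have "\<dots> = p" by (simp add: \<epsilon>_def)
  finally show False using assms[OF ep] by simp
qed

lemma rat_circle:
  fixes u :: real
  defines "X \<equiv> 2*u/(1+u\<^sup>2)" and "Y \<equiv> (1-u\<^sup>2)/(1+u\<^sup>2)"
  shows "X\<^sup>2 + Y\<^sup>2 = 1" "(-X)\<^sup>2 + Y\<^sup>2 = 1" "Y = 1 - 2*u\<^sup>2/(1+u\<^sup>2)"
proof -
  have "0 \<le> u\<^sup>2" by simp
  then have d: "1 + u\<^sup>2 \<noteq> 0" by linarith
  have "X\<^sup>2 + Y\<^sup>2 = ((2*u)\<^sup>2 + (1-u\<^sup>2)\<^sup>2)/(1+u\<^sup>2)\<^sup>2"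
    unfolding X_def Y_def power_divide by (simp only: add_divide_distrib)
  also have "(2*u)\<^sup>2 + (1-u\<^sup>2)\<^sup>2 = (1+u\<^sup>2)\<^sup>2" by algebra
  finally show "X\<^sup>2 + Y\<^sup>2 = 1" using d by simp
  then show "(-X)\<^sup>2 + Y\<^sup>2 = 1" by simp
  show "Y = 1 - 2*u\<^sup>2/(1+u\<^sup>2)" unfolding Y_def using d by (simp add: field_simps)
qed

lemma rat_TQ: fixes u :: real assumes "0 \<le> u" "u \<le> 1"
  shows "(2*u/(1+u\<^sup>2), (1-u\<^sup>2)/(1+u\<^sup>2)) \<in> TQ"
proof -
  have "u\<^sup>2 \<le> 1" using assms by (simp add: abs_square_le_1)
  then show ?thesis using rat_circle(1)[of u] assms unfolding TQ_def by auto
qed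

lemma rat_BH: fixes u :: real assumes "0 \<le> u" "u \<le> 1"
  shows "(2*u/(1+u\<^sup>2), (1-u\<^sup>2)/(1+u\<^sup>2)) \<in> BH" "(-(2*u/(1+u\<^sup>2)), (1-u\<^sup>2)/(1+u\<^sup>2)) \<in> BH"
proof -
  have "u\<^sup>2 \<le> 1" using assms by (simp add: abs_square_le_1)
  then show "(2*u/(1+u\<^sup>2), (1-u\<^sup>2)/(1+u\<^sup>2)) \<in> BH" "(-(2*u/(1+u\<^sup>2)), (1-u\<^sup>2)/(1+u\<^sup>2)) \<in> BH"
    using rat_circle(1,2)[of u] assms unfolding BH_def by auto
qed

lemma bot_ineq:
  fixes x y \<epsilon> :: real
  assumes "x\<^sup>2 + y\<^sup>2 = 1" "0 < \<epsilon>"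
  shows "- x \<le> \<epsilon> + (1 - y)/(2*\<epsilon>)"
proof -
  have "\<bar>y\<bar> \<le> 1" using unit_abs[OF assms(1)] by simp
  then have "x\<^sup>2 \<le> 2*(1 - y)"
  proof -
    have "x\<^sup>2 = (1 - y)*(1 + y)" using assms(1) by (simp add: algebra_simps power2_eq_square)
    also have "\<dots> \<le> (1 - y) * 2" using \<open>\<bar>y\<bar> \<le> 1\<close> by (intro mult_left_mono) auto
    finally show ?thesis by simp
  qed
  moreover have "0 \<le> (2*\<epsilon> + x)\<^sup>2" by simp
  ultimately have "- 2*\<epsilon>*x \<le> 2*\<epsilon>\<^sup>2 + (1 - y)"
    by (simp add: power2_sum power2_eq_square algebra_simps)
  moreover have "2*\<epsilon>*(\<epsilon> + (1 - y)/(2*\<epsilon>)) = 2*\<epsilon>\<^sup>2 + (1 - y)"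
    using assms(2) by (simp add: field_simps power2_eq_square)
  ultimately have "2*\<epsilon>*(-x) \<le> 2*\<epsilon>*(\<epsilon> + (1 - y)/(2*\<epsilon>))" by simp
  then show ?thesis by (rule mult_left_le_imp_le) (use assms(2) in simp)
qed


definition top3 :: "real \<Rightarrow> real \<Rightarrow> real^3" where "top3 x y = vector [x,y,1]"
definition bot3 :: "real \<Rightarrow> real \<Rightarrow> real^3" where "bot3 x y = vector [x,y,-1]"

lemma exC_top: assumes "(x,y) \<in> TQ" shows "top3 x y \<in> exC"
proof -
  obtain t where t: "0 \<le> t" "t \<le> pi/2" "x = cos t" "y = sin t"
    using sincos_total_pi_half assms by (auto simp: TQ_def)
  then have "top3 x y = gamma1 t" by (simp add: top3_def gamma1_def)
  then show ?thesis using t unfolding exC_def by (auto intro!: hull_inc)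
qed

lemma exC_bot: assumes "(x,y) \<in> BH" shows "bot3 x y \<in> exC"
proof -
  obtain t where t: "0 \<le> t" "t \<le> pi" "x = cos t" "y = sin t"
    using sincos_total_pi assms by (auto simp: BH_def)
  then have "bot3 x y = gamma2 t" by (simp add: bot3_def gamma2_def)
  then show ?thesis using t unfolding exC_def by (auto intro!: hull_inc)
qed

lemma exC_valid:
  assumes "\<And>x y. (x,y) \<in> TQ \<Longrightarrow> a \<bullet> top3 x y \<le> b" "\<And>x y. (x,y) \<in> BH \<Longrightarrow> a \<bullet> bot3 x y \<le> b"
    and "p \<in> exC"
  shows "a \<bullet> p \<le> b"
proof -
  have "exC \<subseteq> {p. a \<bullet> p \<le> b}"
    unfolding exC_def
  proof (rule hull_minimal)
    show "convex {p. a \<bullet> p \<le> b}" by (rule convex_halfspace_le)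
    show "gamma1 ` {0..pi/2} \<union> gamma2 ` {0..pi} \<subseteq> {p. a \<bullet> p \<le> b}"
    proof
      fix v assume "v \<in> gamma1 ` {0..pi/2} \<union> gamma2 ` {0..pi}"
      then consider t where "t \<in> {0..pi/2}" "v = gamma1 t" | t where "t \<in> {0..pi}" "v = gamma2 t" by blast
      then show "v \<in> {p. a \<bullet> p \<le> b}"
      proof cases
        case 1
        then have "v = top3 (cos t) (sin t)" "(cos t, sin t) \<in> TQ"
          by (auto simp: gamma1_def top3_def TQ_def intro!: cos_ge_zero sin_ge_zero)
        then show ?thesis using assms(1) by auto
      next
        case 2
        then have "v = bot3 (cos t) (sin t)" "(cos t, sin t) \<in> BH"
          by (auto simp: gamma2_def bot3_def BH_def intro!: sin_ge_zero)
        then show ?thesis using assms(2) by auto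
      qed
    qed
  qed
  then show ?thesis using assms(3) by blast
qed

lemma convex_exC: "convex exC" unfolding exC_def by simp

lemma xbar_top: "xbar = top3 0 1" by (simp add: xbar_def top3_def)
lemma xbar_in: "xbar \<in> exC" unfolding xbar_top by (rule exC_top) (simp add: TQ_def)

abbreviation "TC \<equiv> tcone xbar exC"

lemma xbar_step: "xbar + e *\<^sub>R (vector [a1,a2,a3] :: real^3) = vector [e*a1, 1 + e*a2, 1 + e*a3]"
  by (simp add: xbar_def vec3_eq)

lemma ratfacts: fixes u :: real assumes "0 < 1 + u\<^sup>2"
  shows "(2/(1+u\<^sup>2)) * (-u) = -(2*u/(1+u\<^sup>2))" "(2/(1+u\<^sup>2)) * u = 2*u/(1+u\<^sup>2)"
    "1 + (2/(1+u\<^sup>2)) * (-u\<^sup>2) = (1-u\<^sup>2)/(1+u\<^sup>2)"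
    "1 + (2/(1+u\<^sup>2)) * (-(1+u\<^sup>2)) = -1"
    "(2*u/(1+u\<^sup>2)) * 1 = 2*u/(1+u\<^sup>2)"
    "1 + (2*u/(1+u\<^sup>2)) * (-u) = (1-u\<^sup>2)/(1+u\<^sup>2)"
    "1 + (2*u/(1+u\<^sup>2)) * 0 = 1"
proof -
  have d: "1 + u\<^sup>2 \<noteq> 0" using assms by simp
  show "(2/(1+u\<^sup>2)) * (-u) = -(2*u/(1+u\<^sup>2))" "(2/(1+u\<^sup>2)) * u = 2*u/(1+u\<^sup>2)" by simp_all
  show "1 + (2/(1+u\<^sup>2)) * (-u\<^sup>2) = (1-u\<^sup>2)/(1+u\<^sup>2)" using d by (simp add: field_simps)
  have "(2/(1+u\<^sup>2)) * (1+u\<^sup>2) = 2" using d by (simp add: divide_eq_eq)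
  then show "1 + (2/(1+u\<^sup>2)) * (-(1+u\<^sup>2)) = -1" by (simp only: mult_minus_right)
  show "(2*u/(1+u\<^sup>2)) * 1 = 2*u/(1+u\<^sup>2)" by simp
  show "1 + (2*u/(1+u\<^sup>2)) * (-u) = (1-u\<^sup>2)/(1+u\<^sup>2)" using d by (simp add: field_simps power2_eq_square)
  show "1 + (2*u/(1+u\<^sup>2)) * 0 = 1" by simp
qed

lemma tq1: "d \<in> TC \<Longrightarrow> d$2 \<le> 0"
proof -
  assume d: "d \<in> TC"
  have "vector [0,1,0] \<bullet> d \<le> 0"
  proof (rule tcone_halfspace[OF _ _ d, of _ 1])
    fix p assume "p \<in> exC"
    then show "vector [0,1,0] \<bullet> p \<le> 1"
    proof (rule exC_valid[rotated 2])
      fix x y assume "(x,y) \<in> TQ" then show "vector [0,1,0] \<bullet> top3 x y \<le> (1::real)"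
        using unit_abs[of x y] by (auto simp: TQ_def top3_def inner3)
    next
      fix x y assume "(x,y) \<in> BH" then show "vector [0,1,0] \<bullet> bot3 x y \<le> (1::real)"
        using unit_abs[of x y] by (auto simp: BH_def bot3_def inner3)
    qed
  qed (simp add: xbar_def inner3)
  then show ?thesis by (simp add: inner3)
qed

lemma tq2: assumes "d \<in> TC" "0 < \<epsilon>" shows "- d$1 + d$2/(2*\<epsilon>) + \<epsilon>*d$3/2 \<le> 0"
proof -
  have "vector [-1, 1/(2*\<epsilon>), \<epsilon>/2] \<bullet> d \<le> 0"
  proof (rule tcone_halfspace[OF _ _ assms(1), of _ "\<epsilon>/2 + 1/(2*\<epsilon>)"])
    fix p assume "p \<in> exC"
    then show "vector [-1, 1/(2*\<epsilon>), \<epsilon>/2] \<bullet> p \<le> \<epsilon>/2 + 1/(2*\<epsilon>)"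
    proof (rule exC_valid[rotated 2])
      fix x y assume xy: "(x,y) \<in> TQ"
      then have "0 \<le> x" "y \<le> 1" using unit_abs[of x y] by (auto simp: TQ_def)
      then have "y/(2*\<epsilon>) \<le> 1/(2*\<epsilon>)" using assms(2) by (simp add: divide_right_mono)
      then show "vector [-1, 1/(2*\<epsilon>), \<epsilon>/2] \<bullet> top3 x y \<le> \<epsilon>/2 + 1/(2*\<epsilon>)"
        using \<open>0 \<le> x\<close> by (simp add: top3_def inner3)
    next
      fix x y assume xy: "(x,y) \<in> BH"
      then have "- x \<le> \<epsilon> + (1 - y)/(2*\<epsilon>)" using bot_ineq assms(2) by (auto simp: BH_def)
      moreover have "(1 - y)/(2*\<epsilon>) = 1/(2*\<epsilon>) - y/(2*\<epsilon>)" by (simp add: diff_divide_distrib)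
      ultimately show "vector [-1, 1/(2*\<epsilon>), \<epsilon>/2] \<bullet> bot3 x y \<le> \<epsilon>/2 + 1/(2*\<epsilon>)"
        by (simp add: bot3_def inner3)
    qed
  qed (simp add: xbar_def inner3)
  then show ?thesis by (simp add: inner3)
qed

lemma TC_pts: "(0::real^3) \<in> TC" "vector [0,0,-1] \<in> TC" "vector [1,-1,0] \<in> TC"
proof -
  have "(0::real^3) \<in> Sdir xbar exC" by (rule SdirI[of 1]) (simp_all add: xbar_in)
  then show "(0::real^3) \<in> TC" using Sdir_sub by blast
  have eq1: "xbar + 2 *\<^sub>R vector [0,0,-1] = bot3 0 1" by (simp add: xbar_def bot3_def vec3_eq)
  have mem1: "bot3 0 1 \<in> exC" by (rule exC_bot) (simp add: BH_def)
  have "vector [0,0,-1] \<in> Sdir xbar exC" by (rule SdirI[of 2]) (simp_all only: eq1 mem1 zero_less_numeral)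
  then show "vector [0,0,-1] \<in> TC" using Sdir_sub by blast
  have eq2: "xbar + 1 *\<^sub>R vector [1,-1,0] = top3 1 0" by (simp add: xbar_def top3_def vec3_eq)
  have mem2: "top3 1 0 \<in> exC" by (rule exC_top) (simp add: TQ_def)
  have "vector [1,-1,0] \<in> Sdir xbar exC" by (rule SdirI[of 1]) (simp_all only: eq2 mem2 zero_less_one)
  then show "vector [1,-1,0] \<in> TC" using Sdir_sub by blast
qed

lemma TC_yz: assumes "0 \<le> u" "u \<le> 1"
  shows "vector [-u, -u\<^sup>2, -(1+u\<^sup>2)] \<in> TC" "vector [u, -u\<^sup>2, -(1+u\<^sup>2)] \<in> TC"
proof -
  have "0 \<le> u\<^sup>2" by simp
  then have D: "0 < 1 + u\<^sup>2" by linarith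
  define X Y where "X = 2*u/(1+u\<^sup>2)" "Y = (1-u\<^sup>2)/(1+u\<^sup>2)"
  have e: "0 < 2/(1+u\<^sup>2)" using D by simp
  have eq1: "xbar + (2/(1+u\<^sup>2)) *\<^sub>R vector [-u, -u\<^sup>2, -(1+u\<^sup>2)] = bot3 (-X) Y"
    unfolding xbar_step ratfacts[OF D] by (simp add: bot3_def X_Y_def)
  have mem1: "bot3 (-X) Y \<in> exC" unfolding X_Y_def by (rule exC_bot[OF rat_BH(2)[OF assms]])
  have "vector [-u, -u\<^sup>2, -(1+u\<^sup>2)] \<in> Sdir xbar exC" by (rule SdirI[OF e]) (simp only: eq1 mem1)
  then show "vector [-u, -u\<^sup>2, -(1+u\<^sup>2)] \<in> TC" using Sdir_sub by blast
  have eq2: "xbar + (2/(1+u\<^sup>2)) *\<^sub>R vector [u, -u\<^sup>2, -(1+u\<^sup>2)] = bot3 X Y"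
    unfolding xbar_step ratfacts[OF D] by (simp add: bot3_def X_Y_def)
  have mem2: "bot3 X Y \<in> exC" unfolding X_Y_def by (rule exC_bot[OF rat_BH(1)[OF assms]])
  have "vector [u, -u\<^sup>2, -(1+u\<^sup>2)] \<in> Sdir xbar exC" by (rule SdirI[OF e]) (simp only: eq2 mem2)
  then show "vector [u, -u\<^sup>2, -(1+u\<^sup>2)] \<in> TC" using Sdir_sub by blast
qed

lemma TC_e1: "vector [1,0,0] \<in> TC"
  unfolding tcone_Sdir closure_approachable
proof (intro allI impI)
  fix \<epsilon> :: real assume ep: "0 < \<epsilon>"
  define u where "u = min 1 (\<epsilon>/2)"
  have u: "0 < u" "u \<le> 1" "u < \<epsilon>" using ep by (auto simp: u_def)
  have "0 \<le> u\<^sup>2" by simp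
  then have D: "0 < 1 + u\<^sup>2" by linarith
  define X Y where "X = 2*u/(1+u\<^sup>2)" "Y = (1-u\<^sup>2)/(1+u\<^sup>2)"
  have e: "0 < 2*u/(1+u\<^sup>2)" using D u by simp
  have eq: "xbar + (2*u/(1+u\<^sup>2)) *\<^sub>R vector [1, -u, 0] = top3 X Y"
    unfolding xbar_step ratfacts[OF D] by (simp add: top3_def X_Y_def)
  have mem: "top3 X Y \<in> exC" unfolding X_Y_def using exC_top[OF rat_TQ[OF less_imp_le[OF u(1)] u(2)]] .
  have m: "vector [1, -u, 0] \<in> Sdir xbar exC" by (rule SdirI[OF e]) (simp only: eq mem)
  have dd: "dist (vector [1, -u, 0]) (vector [1,0,0] :: real^3) = u"
  proof -
    have "vector [1, -u, 0] - vector [1,0,0] = (vector [0,-u,0] :: real^3)" by (simp add: vec3_eq)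
    moreover have "norm (vector [0,-u,0] :: real^3) = sqrt (u * u)" by (simp add: norm_eq_sqrt_inner inner3)
    moreover have "sqrt (u * u) = u" using u(1) by simp
    ultimately show ?thesis by (simp add: dist_norm)
  qed
  show "\<exists>y\<in>Sdir xbar exC. dist y (vector [1,0,0]) < \<epsilon>"
    by (rule bexI[OF _ m]) (simp only: dd u(3))
qed


definition F3 :: "(real^3) set" where
  "F3 = (TC \<inter> {d. vector [0,1,0] \<bullet> d = 0}) \<inter> {d. vector [-1,0,0] \<bullet> d = 0}"

lemma convex_TC: "convex TC" by (rule convex_tcone[OF convex_exC xbar_in])

lemma G1_nonneg: assumes "d \<in> TC" "d$2 = 0" shows "0 \<le> d$1"
proof -
  have "- d$1 \<le> \<epsilon> * (- d$3/2)" if "0 < \<epsilon>" for \<epsilon>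
    using tq2[OF assms(1) that] assms(2) by (simp add: algebra_simps)
  then have "- d$1 \<le> 0" by (rule eps_le0)
  then show ?thesis by simp
qed

lemma F3_face: "F3 face_of TC"
proof -
  have G1: "(TC \<inter> {d. vector [0,1,0] \<bullet> d = 0}) face_of TC"
    by (rule face_of_Int_supporting_hyperplane_le[OF convex_TC]) (use tq1 in \<open>simp add: inner3\<close>)
  have "F3 face_of (TC \<inter> {d. vector [0,1,0] \<bullet> d = 0})"
    unfolding F3_def
  proof (rule face_of_Int_supporting_hyperplane_le)
    show "convex (TC \<inter> {d. vector [0,1,0] \<bullet> d = 0})"
      by (intro convex_Int convex_TC convex_hyperplane)
    fix x assume "x \<in> TC \<inter> {d. vector [0,1,0] \<bullet> d = (0::real)}"
    then have "x \<in> TC" "x$2 = 0" by (auto simp: inner3)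
    then show "vector [-1,0,0] \<bullet> x \<le> 0" using G1_nonneg by (simp add: inner3)
  qed
  then show ?thesis using G1 by (rule face_of_trans)
qed

lemma F3_closed: "closed F3"
  unfolding F3_def by (intro closed_Int closed_tcone closed_hyperplane)

theorem not_fe: "\<not> facially_exposed (tcone xbar exC)"
proof
  assume fe: "facially_exposed (tcone xbar exC)"
  have w: "vector [0,0,-1] \<in> F3" using TC_pts(2) by (simp add: F3_def inner3)
  have q: "vector [1,-1,0] \<notin> F3" by (simp add: F3_def inner3)
  have "pface F3 TC" by (simp add: pface_def F3_closed F3_face)
  moreover have "F3 \<noteq> {}" using w by blast
  moreover have "F3 \<noteq> TC" using q TC_pts(3) by blast
  ultimately have "pexposed F3 TC" using fe unfolding facially_exposed_def by blast
  then obtain a b where ab: "TC \<subseteq> {x. a \<bullet> x \<le> b}" "F3 = TC \<inter> {x. a \<bullet> x = b}"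
    unfolding pexposed_def by blast
  have memF: "x \<in> F3 \<longleftrightarrow> x \<in> TC \<and> a \<bullet> x = b" for x using ab(2) by blast
  have "(0::real^3) \<in> F3" using TC_pts(1) by (simp add: F3_def)
  then have b: "b = 0" unfolding memF by simp
  have a3: "a$3 = 0" using w b unfolding memF by (simp add: inner3)
  have le: "- a$1 * u \<le> a$2 * u\<^sup>2 \<and> a$1 * u \<le> a$2 * u\<^sup>2" if "0 \<le> u" "u \<le> 1" for u
  proof -
    have "a \<bullet> vector [-u, -u\<^sup>2, -(1+u\<^sup>2)] \<le> 0" "a \<bullet> vector [u, -u\<^sup>2, -(1+u\<^sup>2)] \<le> 0"
      using TC_yz[OF that] ab(1) b by auto
    then show ?thesis using a3 by (simp add: inner3 algebra_simps)
  qed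
  have a2: "0 \<le> a$2" using le[of 1] by simp
  have "\<bar>a$1\<bar> \<le> \<epsilon> * a$2" if "0 < \<epsilon>" for \<epsilon>
  proof -
    define u where "u = min 1 \<epsilon>"
    have u: "0 < u" "u \<le> 1" "u \<le> \<epsilon>" using that by (auto simp: u_def)
    have "(- a$1) * u \<le> (a$2 * u) * u" "a$1 * u \<le> (a$2 * u) * u" using le[of u] u by (auto simp: power2_eq_square mult.assoc)
    then have "- a$1 \<le> a$2 * u" "a$1 \<le> a$2 * u" using u(1) by (simp_all only: mult_le_cancel_right_pos)
    moreover have "a$2 * u \<le> a$2 * \<epsilon>" using a2 u(3) by (simp add: mult_left_mono)
    ultimately show ?thesis by (simp add: abs_le_iff mult.commute)
  qed
  then have "\<bar>a$1\<bar> \<le> 0" by (rule eps_le0)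
  then have a1: "a$1 = 0" by simp
  have "vector [1,0,0] \<in> F3" unfolding memF using TC_e1 a1 b by (simp add: inner3)
  then show False by (simp add: F3_def inner3)
qed


abbreviation "lx \<equiv> lift1 xbar"
abbreviation "TK \<equiv> tcone lx exK"

lemma lx_eq: "lx = vector [0,1,1,1]" by (simp add: lift1_def xbar_def vec4_eq)
lemma lx_top: "lx = topP 0 1" by (simp add: lift1_def xbar_def topP_def vec4_eq)
lemma lx_in: "lx \<in> exK" unfolding lx_top using Gs_sub_K TQ_Gs[OF TQ_pts(2)] by blast

lemma lx_step: "lx + e *\<^sub>R (vector [a1,a2,a3,a4] :: real^4) = vector [e*a1, 1 + e*a2, 1 + e*a3, 1 + e*a4]"
  by (simp add: lift1_def xbar_def vec4_eq)

lemma K_valid: assumes "\<And>g. g \<in> Gs \<Longrightarrow> a \<bullet> g \<le> 0" "y \<in> exK" shows "a \<bullet> y \<le> 0"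
  using K_dual[of "-a" y] assms by auto

lemma convex_TK: "convex TK" by (rule convex_tcone[OF convex_K lx_in])

lemma tk1: assumes "d \<in> TK" shows "d$2 - d$4 \<le> 0"
proof -
  have "vector [0,1,0,-1] \<bullet> d \<le> 0"
  proof (rule tcone_halfspace[OF _ _ assms, of _ 0])
    fix p assume "p \<in> exK"
    then show "vector [0,1,0,-1] \<bullet> p \<le> 0"
    proof (rule K_valid[rotated])
      fix g assume "g \<in> Gs"
      then show "vector [0,1,0,-1] \<bullet> g \<le> (0::real)"
        using Gs_coords[of g] unit_abs[of "g$1" "g$2"] by (auto simp: inner4)
    qed
  qed (simp add: lx_eq inner4)
  then show ?thesis by (simp add: inner4)
qed

lemma tk2: assumes "d \<in> TK" "0 < \<epsilon>"
  shows "- d$1 + d$2/(2*\<epsilon>) + \<epsilon>*d$3/2 - (\<epsilon>/2 + 1/(2*\<epsilon>))*d$4 \<le> 0"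
proof -
  have "vector [-1, 1/(2*\<epsilon>), \<epsilon>/2, -(\<epsilon>/2 + 1/(2*\<epsilon>))] \<bullet> d \<le> 0"
  proof (rule tcone_halfspace[OF _ _ assms(1), of _ 0])
    fix p assume "p \<in> exK"
    then show "vector [-1, 1/(2*\<epsilon>), \<epsilon>/2, -(\<epsilon>/2 + 1/(2*\<epsilon>))] \<bullet> p \<le> 0"
    proof (rule K_valid[rotated])
      fix g assume "g \<in> Gs"
      then show "vector [-1, 1/(2*\<epsilon>), \<epsilon>/2, -(\<epsilon>/2 + 1/(2*\<epsilon>))] \<bullet> g \<le> (0::real)"
      proof (cases rule: Gs_cases)
        case (1 x y)
        then have "0 \<le> x" "y \<le> 1" using unit_abs[of x y] by (auto simp: TQ_def)
        then have "y/(2*\<epsilon>) \<le> 1/(2*\<epsilon>)" using assms(2) by (simp add: divide_right_mono)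
        then show ?thesis using \<open>0 \<le> x\<close> 1 by (simp add: topP_def inner4)
      next
        case (2 x y)
        then have "- x \<le> \<epsilon> + (1 - y)/(2*\<epsilon>)" using bot_ineq assms(2) by (auto simp: BH_def)
        moreover have "(1 - y)/(2*\<epsilon>) = 1/(2*\<epsilon>) - y/(2*\<epsilon>)" by (simp add: diff_divide_distrib)
        ultimately show ?thesis using 2 by (simp add: botP_def inner4)
      qed
    qed
  qed (simp add: lx_eq inner4)
  then show ?thesis by (simp add: inner4 algebra_simps)
qed

definition GK :: "(real^4) set" where "GK = TK \<inter> {d. vector [0,1,0,-1] \<bullet> d = 0}"

lemma GK_face: "GK face_of TK"
  unfolding GK_def by (rule face_of_Int_supporting_hyperplane_le[OF convex_TK]) (use tk1 in \<open>simp add: inner4\<close>)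

lemma GK_closed: "closed GK"
  unfolding GK_def by (intro closed_Int closed_tcone closed_hyperplane)

lemma GK_mem: "d \<in> GK \<longleftrightarrow> d \<in> TK \<and> d$2 = d$4"
  by (simp add: GK_def inner4)

lemma GK_nonneg: assumes "d \<in> GK" shows "0 \<le> d$1"
proof -
  have d: "d \<in> TK" "d$2 = d$4" using assms GK_mem by auto
  have "- d$1 \<le> \<epsilon> * ((d$4 - d$3)/2)" if "0 < \<epsilon>" for \<epsilon>
  proof -
    have "- d$1 + d$4/(2*\<epsilon>) + \<epsilon>*d$3/2 - (\<epsilon>/2 + 1/(2*\<epsilon>))*d$4 \<le> 0" using tk2[OF d(1) that] d(2) by simp
    moreover have "(\<epsilon>/2 + 1/(2*\<epsilon>))*d$4 = \<epsilon>*d$4/2 + d$4/(2*\<epsilon>)" by (simp add: ring_distribs)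
    moreover have "\<epsilon> * ((d$4 - d$3)/2) = \<epsilon>*d$4/2 - \<epsilon>*d$3/2" by (simp add: diff_divide_distrib right_diff_distrib)
    ultimately show ?thesis by argo
  qed
  then have "- d$1 \<le> 0" by (rule eps_le0)
  then show ?thesis by simp
qed

lemma ratfacts4: fixes u :: real assumes "0 < 1 + u\<^sup>2"
  shows "2 * (-(u/(1+u\<^sup>2))) = -(2*u/(1+u\<^sup>2))"
    "1 + 2 * (-(u/(1+u\<^sup>2)) * u) = (1-u\<^sup>2)/(1+u\<^sup>2)"
    "1 + (2*u/(1+u\<^sup>2)) * (-u) = (1-u\<^sup>2)/(1+u\<^sup>2)"
proof -
  have d: "1 + u\<^sup>2 \<noteq> 0" using assms by simp
  show "2 * (-(u/(1+u\<^sup>2))) = -(2*u/(1+u\<^sup>2))" by simp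
  show "1 + 2 * (-(u/(1+u\<^sup>2)) * u) = (1-u\<^sup>2)/(1+u\<^sup>2)" using d by (simp add: field_simps power2_eq_square)
  show "1 + (2*u/(1+u\<^sup>2)) * (-u) = (1-u\<^sup>2)/(1+u\<^sup>2)" using d by (simp add: field_simps power2_eq_square)
qed

lemma TK_pts: "vector [0,0,-1,0] \<in> TK" "vector [1,-1,0,0] \<in> TK"
proof -
  have eq1: "lx + 2 *\<^sub>R vector [0,0,-1,0] = botP 0 1" unfolding lx_step by (simp add: botP_def vec4_eq)
  have mem1: "botP 0 1 \<in> exK" using Gs_sub_K BH_Gs[OF BH_pts(3)] by blast
  have "vector [0,0,-1,0] \<in> Sdir lx exK" by (rule SdirI[of 2]) (simp_all only: eq1 mem1 zero_less_numeral)
  then show "vector [0,0,-1,0] \<in> TK" using Sdir_sub by blast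
  have eq2: "lx + 1 *\<^sub>R vector [1,-1,0,0] = topP 1 0" unfolding lx_step by (simp add: topP_def vec4_eq)
  have mem2: "topP 1 0 \<in> exK" using Gs_sub_K TQ_Gs[OF TQ_pts(1)] by blast
  have "vector [1,-1,0,0] \<in> Sdir lx exK" by (rule SdirI[of 1]) (simp_all only: eq2 mem2 zero_less_one)
  then show "vector [1,-1,0,0] \<in> TK" using Sdir_sub by blast
qed

lemma norm4_u: "0 \<le> u \<Longrightarrow> norm (vector [0,-u,0,0] :: real^4) = u"
proof -
  assume u: "0 \<le> u"
  have "norm (vector [0,-u,0,0] :: real^4) = sqrt (u * u)" by (simp add: norm_eq_sqrt_inner inner4)
  also have "sqrt (u * u) = u" using u by simp
  finally show ?thesis .
qed

lemma TK_e1: "vector [1,0,0,0] \<in> TK"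
  unfolding tcone_Sdir[of lx] closure_approachable
proof (intro allI impI)
  fix \<epsilon> :: real assume ep: "0 < \<epsilon>"
  define u where "u = min 1 (\<epsilon>/2)"
  have u: "0 < u" "u \<le> 1" "u < \<epsilon>" using ep by (auto simp: u_def)
  have "0 \<le> u\<^sup>2" by simp
  then have D: "0 < 1 + u\<^sup>2" by linarith
  define X Y where "X = 2*u/(1+u\<^sup>2)" "Y = (1-u\<^sup>2)/(1+u\<^sup>2)"
  have e: "0 < 2*u/(1+u\<^sup>2)" using D u by simp
  have eq: "lx + (2*u/(1+u\<^sup>2)) *\<^sub>R vector [1, -u, 0, 0] = topP X Y"
    unfolding lx_step ratfacts4[OF D] by (simp add: topP_def X_Y_def)
  have mem: "topP X Y \<in> exK" unfolding X_Y_def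
    using Gs_sub_K TQ_Gs[OF rat_TQ[OF less_imp_le[OF u(1)] u(2)]] by blast
  have m: "vector [1, -u, 0, 0] \<in> Sdir lx exK" by (rule SdirI[OF e]) (simp only: eq mem)
  have dd: "dist (vector [1, -u, 0, 0]) (vector [1,0,0,0] :: real^4) = u"
  proof -
    have "vector [1, -u, 0, 0] - vector [1,0,0,0] = (vector [0,-u,0,0] :: real^4)" by (simp add: vec4_eq)
    then show ?thesis using norm4_u[of u] u(1) by (simp add: dist_norm)
  qed
  show "\<exists>y\<in>Sdir lx exK. dist y (vector [1,0,0,0]) < \<epsilon>"
    by (rule bexI[OF _ m]) (simp only: dd u(3))
qed

lemma v_in_tcone: "vector [-1,0,0,0] \<in> tcone (vector [0,0,-1,0]) TK"
  unfolding tcone_Sdir[of "vector [0,0,-1,0]"] closure_approachable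
proof (intro allI impI)
  fix \<epsilon> :: real assume ep: "0 < \<epsilon>"
  define u where "u = min 1 (\<epsilon>/2)"
  have u: "0 < u" "u \<le> 1" "u < \<epsilon>" using ep by (auto simp: u_def)
  have "0 \<le> u\<^sup>2" by simp
  then have D: "0 < 1 + u\<^sup>2" by linarith
  define X Y where "X = 2*u/(1+u\<^sup>2)" "Y = (1-u\<^sup>2)/(1+u\<^sup>2)"
  define y :: "real^4" where "y = vector [-(u/(1+u\<^sup>2)), -(u/(1+u\<^sup>2)) * u, -1, 0]"
  have eq: "lx + 2 *\<^sub>R y = botP (-X) Y"
    unfolding y_def lx_step ratfacts4[OF D] by (simp add: botP_def X_Y_def)
  have mem: "botP (-X) Y \<in> exK" unfolding X_Y_def
    using Gs_sub_K BH_Gs[OF rat_BH(2)[OF less_imp_le[OF u(1)] u(2)]] by blast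
  have "y \<in> Sdir lx exK" by (rule SdirI[of 2]) (simp_all only: eq mem zero_less_numeral)
  then have yT: "y \<in> TK" using Sdir_sub by blast
  have e: "0 < u/(1+u\<^sup>2)" using D u by simp
  have eq2: "vector [0,0,-1,0] + (u/(1+u\<^sup>2)) *\<^sub>R vector [-1, -u, 0, 0] = y"
    by (simp add: y_def vec4_eq)
  have m: "vector [-1, -u, 0, 0] \<in> Sdir (vector [0,0,-1,0]) TK" by (rule SdirI[OF e]) (simp only: eq2 yT)
  have dd: "dist (vector [-1, -u, 0, 0]) (vector [-1,0,0,0] :: real^4) = u"
  proof -
    have "vector [-1, -u, 0, 0] - vector [-1,0,0,0] = (vector [0,-u,0,0] :: real^4)" by (simp add: vec4_eq)
    then show ?thesis using norm4_u[of u] u(1) by (simp add: dist_norm)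
  qed
  show "\<exists>y\<in>Sdir (vector [0,0,-1,0]) TK. dist y (vector [-1,0,0,0]) < \<epsilon>"
    by (rule bexI[OF _ m]) (simp only: dd u(3))
qed

lemma v_notin: "vector [-1,0,0,0] \<notin> tcone (vector [0,0,-1,0]) GK"
proof
  assume v: "vector [-1,0,0,0] \<in> tcone (vector [0,0,-1,0]) GK"
  have "(vector [-1,0,0,0] :: real^4) \<bullet> vector [-1,0,0,0] \<le> 0"
  proof (rule tcone_halfspace[where a="vector [-1,0,0,0] :: real^4" and b=0, OF _ _ v])
    fix p assume "p \<in> GK" then show "(vector [-1,0,0,0] :: real^4) \<bullet> p \<le> 0" using GK_nonneg by (simp add: inner4)
  qed (simp add: inner4)
  then show False by (simp add: inner4)
qed

theorem not_ste: "\<not> strongly_tangentially_exposed exK"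
proof
  assume "strongly_tangentially_exposed exK"
  moreover have "TK \<in> lex_tcones exK" by (rule lex_tcones.base[OF lx_in])
  ultimately have te: "tangentially_exposed TK" unfolding strongly_tangentially_exposed_def by blast
  have x4: "vector [0,0,-1,0] \<in> GK" using TK_pts(1) by (simp add: GK_mem)
  have "vector [1,-1,0,0] \<notin> GK" by (simp add: GK_mem)
  then have ne: "GK \<noteq> TK" using TK_pts(2) by blast
  have pf: "pface GK TK" by (simp add: pface_def GK_closed GK_face)
  have "\<forall>F x. pface F TK \<and> F \<noteq> TK \<and> x \<in> F \<longrightarrow> tcone x TK \<inter> span F = tcone x F"
    using te unfolding tangentially_exposed_def .
  then have eq: "tcone (vector [0,0,-1,0]) TK \<inter> span GK = tcone (vector [0,0,-1,0]) GK"
    using pf ne x4 by simp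
  have e1: "vector [1,0,0,0] \<in> GK" using TK_e1 by (simp add: GK_mem)
  have "vector [-1,0,0,0] = - (vector [1,0,0,0] :: real^4)" by (simp add: vec4_eq)
  then have "vector [-1,0,0,0] \<in> span GK" using span_neg[OF span_base[OF e1]] by simp
  then have "vector [-1,0,0,0] \<in> tcone (vector [0,0,-1,0]) GK" using eq v_in_tcone by blast
  then show False using v_notin by blast
qed


theorem mainTheorem8:
  shows "facially_dual_complete exK \<and> \<not> facially_exposed (tcone xbar exC)
         \<and> \<not> strongly_tangentially_exposed exK"
  using FDC not_fe not_ste by blast

end
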